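(* Let $M$ be a Poisson manifold with a local star product $*$, and let $\omega:C^\infty_0(M)[[\lambda]]\to\mathbb C[[\lambda]]$ be a positive $\mathbb C[[\lambda]]$-linear functional. Let $f,g\in C^\infty_0(M)[[\lambda]]$ and $\alpha\in\mathbb C[[\lambda]]$. Then: (i) if $\operatorname{supp}f\cap\operatorname{supp}\omega=\emptyset$, then $f\in\mathcal J_\omega$, hence $\psi_f=0$; (ii) $\operatorname{supp}\psi_f\subseteq\operatorname{supp}f\cap\operatorname{supp}\omega$; (iii) $\operatorname{supp}(\psi_f+\psi_g)\subseteq\operatorname{supp}\psi_f\cup\operatorname{supp}\psi_g$ and $\operatorname{supp}(\alpha\psi_f)\subseteq\operatorname{supp}\psi_f$.
   Context: $C^\infty(M)$ denotes complex-valued smooth functions and $\lambda$ is a formal parameter. A (local) star product $*$ on $M$ is an associative $\mathbb C[[\lambda]]$-bilinear product on $C^\infty(M)[[\lambda]]$ with $f*g=\sum_{r\ge0}\lambda^rM_r(f,g)$ for $f,g\in C^\infty(M)$, where the $M_r$ are local (e.g. bidifferential) operators, $M_0(f,g)=fg$, $M_1(f,g)-M_1(g,f)=\mathrm i\{f,g\}$, $M_r$ vanishes on constants for $r\ge1$, and $\overline{f*g}=\bar g*\bar f$ (pointwise complex conjugation, $\bar\lambda=\lambda$). For $f=\sum_r\lambda^rf_r$, $\operatorname{supp}f$ is the closure of $\bigcup_r\operatorname{supp}f_r$; for open $O$, $C^\infty_0(O)[[\lambda]]$ is the set of formal series all of whose coefficients have compact support in $O$. $\mathbb R[[\lambda]]$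 is ordered by declaring $a>0$ iff its lowest-order nonzero coefficient is positive. A $\mathbb C[[\lambda]]$-linear functional $\omega$ on $C^\infty_0(M)[[\lambda]]$ is positive if $\omega(\bar f*f)\ge0$ for all $f$; $\operatorname{supp}\omega$ is the complement of the union of all open $O\subseteq M$ with $\omega|_{C^\infty_0(O)[[\lambda]]}=0$. The Gel'fand ideal is $\mathcal J_\omega=\{f\in C^\infty_0(M)[[\lambda]]:\omega(\bar f*f)=0\}$, the GNS pre-Hilbert space is $\mathfrak H_\omega=C^\infty_0(M)[[\lambda]]/\mathcal J_\omega$ with equivalence classes $\psi_f$ and Hermitian product $\langle\psi_f,\psi_g\rangle=\omega(\bar f*g)$. The support of a vector is $\operatorname{supp}\psi_f:=\operatorname{supp}\omega_f$, where $\omega_f(g)=\omega(\bar f*g*f)$ for $g\in C^\infty_0(M)[[\lambda]]$. *)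

theory Defs
  imports "HOL-Analysis.Analysis" "HOL-Computational_Algebra.Formal_Power_Series"
begin

fun Ck_on :: "nat \<Rightarrow> ('a::real_normed_vector \<Rightarrow> 'b::real_normed_vector) \<Rightarrow> 'a set \<Rightarrow> bool" where
  "Ck_on 0 f S = continuous_on S f"
| "Ck_on (Suc k) f S = (f differentiable_on S \<and>
      (\<forall>v. Ck_on k (\<lambda>x. frechet_derivative f (at x) v) S))"

definition smooth_on :: "('a::real_normed_vector \<Rightarrow> 'b::real_normed_vector) \<Rightarrow> 'a set \<Rightarrow> bool" where
  "smooth_on f S \<longleftrightarrow> (\<forall>k. Ck_on k f S)"

definition is_chart :: "('m::topological_space) set \<Rightarrow> ('m \<Rightarrow> real^'n) \<Rightarrow> bool" where
  "is_chart U \<phi> \<longleftrightarrow> open U \<and> open (\<phi> ` U) \<and> homeomorphism U (\<phi> ` U) \<phi> (inv_into U \<phi>)"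

definition smooth_atlas :: "(('m::topological_space) set \<times> ('m \<Rightarrow> real^'n)) set \<Rightarrow> bool" where
  "smooth_atlas A \<longleftrightarrow>
     (\<forall>(U,\<phi>)\<in>A. is_chart U \<phi>) \<and> (\<Union>(U,\<phi>)\<in>A. U) = UNIV \<and>
     (\<forall>(U,\<phi>)\<in>A. \<forall>(V,\<psi>)\<in>A. smooth_on (\<psi> \<circ> inv_into U \<phi>) (\<phi> ` (U \<inter> V)))"

definition smooth_fun :: "('m set \<times> ('m \<Rightarrow> real^'n)) set \<Rightarrow> ('m \<Rightarrow> complex) \<Rightarrow> bool" where
  "smooth_fun A f \<longleftrightarrow> (\<forall>(U,\<phi>)\<in>A. smooth_on (f \<circ> inv_into U \<phi>) (\<phi> ` U))"

definition tsupp :: "('m::topological_space \<Rightarrow> complex) \<Rightarrow> 'm set" where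
  "tsupp f = closure {x. f x \<noteq> 0}"

text \<open>A Poisson bracket on C^infinity(M) (complex-bilinear extension of a real Poisson bracket).\<close>
definition poisson_bracket ::
  "('m::topological_space set \<times> ('m \<Rightarrow> real^'n)) set \<Rightarrow>
   (('m \<Rightarrow> complex) \<Rightarrow> ('m \<Rightarrow> complex) \<Rightarrow> ('m \<Rightarrow> complex)) \<Rightarrow> bool" where
  "poisson_bracket A pb \<longleftrightarrow>
    (\<forall>f g h c. smooth_fun A f \<longrightarrow> smooth_fun A g \<longrightarrow> smooth_fun A h \<longrightarrow>
       smooth_fun A (pb f g) \<and>
       pb (\<lambda>x. f x + g x) h = (\<lambda>x. pb f h x + pb g h x) \<and>
       pb (\<lambda>x. c * f x) g = (\<lambda>x. c * pb f g x) \<and>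
       pb f g = (\<lambda>x. - pb g f x) \<and>
       pb f (\<lambda>x. g x * h x) = (\<lambda>x. pb f g x * h x + g x * pb f h x) \<and>
       pb f (pb g h) = (\<lambda>x. pb (pb f g) h x + pb g (pb f h) x) \<and>
       (\<lambda>x. cnj (pb f g x)) = pb (\<lambda>x. cnj (f x)) (\<lambda>x. cnj (g x)))"

text \<open>An element of C^infinity(M)[[lambda]] is represented by its coefficient sequence.\<close>
type_synonym 'm fseries = "nat \<Rightarrow> 'm \<Rightarrow> complex"

definition smooth_series :: "('m set \<times> ('m \<Rightarrow> real^'n)) set \<Rightarrow> 'm fseries \<Rightarrow> bool" where
  "smooth_series A f \<longleftrightarrow> (\<forall>r. smooth_fun A (f r))"

definition star :: "(nat \<Rightarrow> ('m \<Rightarrow> complex) \<Rightarrow> ('m \<Rightarrow> complex) \<Rightarrow> ('m \<Rightarrow> complex)) \<Rightarrow>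
    'm fseries \<Rightarrow> 'm fseries \<Rightarrow> 'm fseries" where
  "star Mr f g = (\<lambda>r x. \<Sum>k\<le>r. \<Sum>i\<le>r - k. Mr k (f i) (g (r - k - i)) x)"

definition series_add :: "'m fseries \<Rightarrow> 'm fseries \<Rightarrow> 'm fseries" where
  "series_add f g = (\<lambda>r x. f r x + g r x)"

definition series_smult :: "complex fps \<Rightarrow> 'm fseries \<Rightarrow> 'm fseries" where
  "series_smult a f = (\<lambda>r x. \<Sum>i\<le>r. fps_nth a i * f (r - i) x)"

definition series_cnj :: "'m fseries \<Rightarrow> 'm fseries" where
  "series_cnj f = (\<lambda>r x. cnj (f r x))"

definition star_product ::
  "('m::topological_space set \<times> ('m \<Rightarrow> real^'n)) set \<Rightarrow>
   (('m \<Rightarrow> complex) \<Rightarrow> ('m \<Rightarrow> complex) \<Rightarrow> ('m \<Rightarrow> complex)) \<Rightarrow>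
   (nat \<Rightarrow> ('m \<Rightarrow> complex) \<Rightarrow> ('m \<Rightarrow> complex) \<Rightarrow> ('m \<Rightarrow> complex)) \<Rightarrow> bool" where
  "star_product A pb Mr \<longleftrightarrow>
    (\<forall>r f g h c. smooth_fun A f \<longrightarrow> smooth_fun A g \<longrightarrow> smooth_fun A h \<longrightarrow>
       smooth_fun A (Mr r f g) \<and>
       Mr r (\<lambda>x. f x + g x) h = (\<lambda>x. Mr r f h x + Mr r g h x) \<and>
       Mr r h (\<lambda>x. f x + g x) = (\<lambda>x. Mr r h f x + Mr r h g x) \<and>
       Mr r (\<lambda>x. c * f x) g = (\<lambda>x. c * Mr r f g x) \<and>
       Mr r g (\<lambda>x. c * f x) = (\<lambda>x. c * Mr r g f x) \<and>
       tsupp (Mr r f g) \<subseteq> tsupp f \<inter> tsupp g \<and>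
       (\<lambda>x. cnj (Mr r f g x)) = Mr r (\<lambda>x. cnj (g x)) (\<lambda>x. cnj (f x)) \<and>
       (r \<ge> 1 \<longrightarrow> Mr r (\<lambda>_. c) f = (\<lambda>_. 0) \<and> Mr r f (\<lambda>_. c) = (\<lambda>_. 0))) \<and>
    (\<forall>f g. smooth_fun A f \<longrightarrow> smooth_fun A g \<longrightarrow>
       Mr 0 f g = (\<lambda>x. f x * g x) \<and>
       (\<lambda>x. Mr 1 f g x - Mr 1 g f x) = (\<lambda>x. \<i> * pb f g x)) \<and>
    (\<forall>f g h. smooth_series A f \<longrightarrow> smooth_series A g \<longrightarrow> smooth_series A h \<longrightarrow>
       star Mr (star Mr f g) h = star Mr f (star Mr g h))"

definition C0 :: "('m::topological_space set \<times> ('m \<Rightarrow> real^'n)) set \<Rightarrow> 'm set \<Rightarrow> 'm fseries set" where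
  "C0 A S = {f. smooth_series A f \<and> (\<forall>r. compact (tsupp (f r)) \<and> tsupp (f r) \<subseteq> S)}"

definition ssupp :: "('m::topological_space) fseries \<Rightarrow> 'm set" where
  "ssupp f = closure (\<Union>r. tsupp (f r))"

definition fps_nonneg :: "complex fps \<Rightarrow> bool" where
  "fps_nonneg a \<longleftrightarrow> (\<forall>n. Im (fps_nth a n) = 0) \<and>
     (a = 0 \<or> Re (fps_nth a (subdegree a)) > 0)"

definition lin_functional ::
  "('m::topological_space set \<times> ('m \<Rightarrow> real^'n)) set \<Rightarrow> ('m fseries \<Rightarrow> complex fps) \<Rightarrow> bool" where
  "lin_functional A \<omega> \<longleftrightarrow>
     (\<forall>f\<in>C0 A UNIV. \<forall>g\<in>C0 A UNIV. \<omega> (series_add f g) = \<omega> f + \<omega> g) \<and>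
     (\<forall>a. \<forall>f\<in>C0 A UNIV. \<omega> (series_smult a f) = a * \<omega> f)"

definition positive_functional ::
  "('m::topological_space set \<times> ('m \<Rightarrow> real^'n)) set \<Rightarrow>
   (nat \<Rightarrow> ('m \<Rightarrow> complex) \<Rightarrow> ('m \<Rightarrow> complex) \<Rightarrow> ('m \<Rightarrow> complex)) \<Rightarrow>
   ('m fseries \<Rightarrow> complex fps) \<Rightarrow> bool" where
  "positive_functional A Mr \<omega> \<longleftrightarrow> lin_functional A \<omega> \<and>
     (\<forall>f\<in>C0 A UNIV. fps_nonneg (\<omega> (star Mr (series_cnj f) f)))"

definition func_supp ::
  "('m::topological_space set \<times> ('m \<Rightarrow> real^'n)) set \<Rightarrow> ('m fseries \<Rightarrow> complex fps) \<Rightarrow> 'm set" where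
  "func_supp A \<omega> = - \<Union>{S. open S \<and> (\<forall>f\<in>C0 A S. \<omega> f = 0)}"

definition gelfand_ideal ::
  "('m::topological_space set \<times> ('m \<Rightarrow> real^'n)) set \<Rightarrow>
   (nat \<Rightarrow> ('m \<Rightarrow> complex) \<Rightarrow> ('m \<Rightarrow> complex) \<Rightarrow> ('m \<Rightarrow> complex)) \<Rightarrow>
   ('m fseries \<Rightarrow> complex fps) \<Rightarrow> 'm fseries set" where
  "gelfand_ideal A Mr \<omega> = {f \<in> C0 A UNIV. \<omega> (star Mr (series_cnj f) f) = 0}"

text \<open>omega_f(g) = omega(conj f * g * f); the support of psi_f is the support of omega_f.\<close>
definition vec_functional ::
  "(nat \<Rightarrow> ('m \<Rightarrow> complex) \<Rightarrow> ('m \<Rightarrow> complex) \<Rightarrow> ('m \<Rightarrow> complex)) \<Rightarrow>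
   ('m fseries \<Rightarrow> complex fps) \<Rightarrow> 'm fseries \<Rightarrow> ('m fseries \<Rightarrow> complex fps)" where
  "vec_functional Mr \<omega> f = (\<lambda>g. \<omega> (star Mr (star Mr (series_cnj f) g) f))"

end

theory Submission
  imports Defs
begin


lemma Ck_on_Suc_mono: "Ck_on (Suc k) f S \<Longrightarrow> Ck_on k f S"
proof (induction k arbitrary: f)
  case 0
  then show ?case by (simp add: differentiable_imp_continuous_on)
next
  case (Suc k)
  then show ?case by auto
qed

lemma Ck_on_Suc_D: "Ck_on (Suc k) f S \<Longrightarrow> Ck_on k (\<lambda>x. frechet_derivative f (at x) v) S"
  by simp

lemma Ck_on_subset: "Ck_on k f S \<Longrightarrow> T \<subseteq> S \<Longrightarrow> Ck_on k f T"
proof (induction k arbitrary: f)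
  case 0
  then show ?case by (auto intro: continuous_on_subset)
next
  case (Suc k)
  then show ?case by (auto intro: differentiable_on_subset)
qed

lemma Ck_on_has_derivative:
  assumes "open S" "Ck_on (Suc k) f S" "x \<in> S"
  shows "(f has_derivative frechet_derivative f (at x)) (at x)"
proof -
  have "f differentiable (at x within S)" using assms by (auto simp: differentiable_on_def)
  then have "f differentiable (at x)" using assms at_within_open by metis
  then show ?thesis by (simp add: frechet_derivative_works)
qed

lemma Ck_on_cong:
  assumes "open S" "\<And>x. x \<in> S \<Longrightarrow> f x = g x" "Ck_on k f S"
  shows "Ck_on k g S"
  using assms
proof (induction k arbitrary: f g)
  case 0
  then show ?case using continuous_on_cong by force
next
  case (Suc k)
  have hd: "(g has_derivative frechet_derivative f (at x)) (at x)" if "x \<in> S" for x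
    using has_derivative_transform_within_open[OF Ck_on_has_derivative[OF Suc.prems(1) Suc.prems(3) that] Suc.prems(1) that]
      Suc.prems(2) by blast
  have eq: "frechet_derivative g (at x) = frechet_derivative f (at x)" if "x \<in> S" for x
    using hd[OF that] frechet_derivative_at by metis
  have "g differentiable_on S"
    using hd by (meson differentiable_at_withinI differentiable_def differentiable_on_def)
  moreover have "Ck_on k (\<lambda>x. frechet_derivative g (at x) v) S" for v
    using Suc.IH[of "\<lambda>x. frechet_derivative f (at x) v" "\<lambda>x. frechet_derivative g (at x) v"] Suc.prems eq
    by auto
  ultimately show ?case by simp
qed

lemma Ck_on_SucI:
  assumes "open S" "\<And>x. x \<in> S \<Longrightarrow> (f has_derivative f' x) (at x)"
    "\<And>v. Ck_on k (\<lambda>x. f' x v) S"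
  shows "Ck_on (Suc k) f S"
proof -
  have eq: "frechet_derivative f (at x) = f' x" if "x \<in> S" for x
    using assms(2)[OF that] frechet_derivative_at by metis
  have "f differentiable_on S"
    using assms(2) by (meson differentiable_at_withinI differentiable_def differentiable_on_def)
  moreover have "Ck_on k (\<lambda>x. frechet_derivative f (at x) v) S" for v
    using Ck_on_cong[OF assms(1) _ assms(3)[of v], of "\<lambda>x. frechet_derivative f (at x) v"] eq by auto
  ultimately show ?thesis by simp
qed

lemma Ck_on_local:
  assumes "open S" "\<And>x. x \<in> S \<Longrightarrow> \<exists>N. open N \<and> x \<in> N \<and> Ck_on k f N"
  shows "Ck_on k f S"
  using assms
proof (induction k arbitrary: f)
  case 0
  have "continuous (at x) f" if "x \<in> S" for x
    using 0(2)[OF that] by (metis Ck_on.simps(1) continuous_on_eq_continuous_at)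
  then show ?case by (simp add: continuous_at_imp_continuous_on)
next
  case (Suc k)
  have "f differentiable (at x)" if "x \<in> S" for x
    using Suc.prems(2)[OF that] by (metis Ck_on.simps(2) at_within_open differentiable_on_def)
  then have d: "f differentiable_on S"
    by (simp add: differentiable_at_imp_differentiable_on)
  have "Ck_on k (\<lambda>x. frechet_derivative f (at x) v) S" for v
    apply (rule Suc.IH[OF Suc.prems(1)])
    using Suc.prems(2) by fastforce
  then show ?case using d by simp
qed

lemma Ck_on_const: "Ck_on k (\<lambda>x. c) S"
proof (induction k arbitrary: c S)
  case 0
  then show ?case by simp
next
  case (Suc k)
  have "(\<lambda>x. c) differentiable_on S" by simp
  moreover have "frechet_derivative (\<lambda>x. c) (at x) = (\<lambda>v. 0)" for x
    using frechet_derivative_at[OF has_derivative_const] by metis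
  ultimately show ?case using Suc by simp
qed

lemma Ck_on_add:
  assumes "open S" "Ck_on k f S" "Ck_on k g S"
  shows "Ck_on k (\<lambda>x. f x + g x) S"
  using assms
proof (induction k arbitrary: f g)
  case 0
  then show ?case by (auto intro: continuous_on_add)
next
  case (Suc k)
  show ?case
    apply (rule Ck_on_SucI[OF Suc.prems(1), where f'="\<lambda>x v. frechet_derivative f (at x) v + frechet_derivative g (at x) v"])
    using Ck_on_has_derivative[OF Suc.prems(1) Suc.prems(2)] Ck_on_has_derivative[OF Suc.prems(1) Suc.prems(3)]
     apply (auto intro: has_derivative_add)[1]
    using Suc by auto
qed

lemma Ck_on_sum:
  fixes F :: "'i \<Rightarrow> 'a::real_normed_vector \<Rightarrow> 'b::real_normed_vector"
  assumes "open S" "finite I" "\<And>i. i \<in> I \<Longrightarrow> Ck_on k (F i) S"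
  shows "Ck_on k (\<lambda>x. \<Sum>i\<in>I. F i x) S"
  using assms(2,3)
proof (induction I rule: finite_induct)
  case empty
  then show ?case by (simp add: Ck_on_const)
next
  case (insert i I)
  then show ?case by (simp add: Ck_on_add[OF assms(1)])
qed

lemma Ck_on_linear:
  assumes "bounded_linear L" "open S" "Ck_on k f S"
  shows "Ck_on k (\<lambda>x. L (f x)) S"
  using assms(2,3)
proof (induction k arbitrary: f)
  case 0
  then show ?case
    using assms(1) by (auto intro: continuous_on_compose2[OF linear_continuous_on[OF assms(1)]])
next
  case (Suc k)
  show ?case
    apply (rule Ck_on_SucI[OF Suc.prems(1), where f'="\<lambda>x v. L (frechet_derivative f (at x) v)"])
    using Ck_on_has_derivative[OF Suc.prems(1) Suc.prems(2)] bounded_linear.has_derivative[OF assms(1)]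
     apply blast
    using Suc by auto
qed

lemma Ck_on_bilinear:
  fixes prod :: "'b::real_normed_vector \<Rightarrow> 'c::real_normed_vector \<Rightarrow> 'd::real_normed_vector"
    and f :: "'a::real_normed_vector \<Rightarrow> 'b" and g :: "'a \<Rightarrow> 'c"
  assumes "bounded_bilinear prod" "open S" "Ck_on k f S" "Ck_on k g S"
  shows "Ck_on k (\<lambda>x. prod (f x) (g x)) S"
  using assms(2-)
proof (induction k arbitrary: f g)
  case 0
  then show ?case using bounded_bilinear.continuous_on[OF assms(1)] by auto
next
  case (Suc k)
  show ?case
    apply (rule Ck_on_SucI[OF Suc.prems(1), where f'="\<lambda>x v. prod (f x) (frechet_derivative g (at x) v) + prod (frechet_derivative f (at x) v) (g x)"])
    using Ck_on_has_derivative[OF Suc.prems(1) Suc.prems(2)] Ck_on_has_derivative[OF Suc.prems(1) Suc.prems(3)]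
      bounded_bilinear.FDERIV[OF assms(1)]
     apply blast
    apply (rule Ck_on_add[OF Suc.prems(1)])
    using Suc.prems Ck_on_Suc_mono[of k f S] Ck_on_Suc_mono[of k g S]
    by (auto intro!: Suc.IH Ck_on_Suc_D simp del: Ck_on.simps)
qed

lemma linear_basis_expand:
  fixes f :: "'a::euclidean_space \<Rightarrow> 'b::real_vector"
  assumes lf: "linear f"
  shows "f x = (\<Sum>j\<in>Basis. (x \<bullet> j) *\<^sub>R f j)"
proof -
  interpret linear f by fact
  show ?thesis
    by (simp add: euclidean_representation sum[symmetric] scale[symmetric])
qed

lemma Ck_on_compose:
  fixes G :: "'a::real_normed_vector \<Rightarrow> 'b::euclidean_space" and b :: "'b \<Rightarrow> 'c::real_normed_vector"
  assumes S: "open S" and Om: "open Om" and G: "smooth_on G S" and GS: "G ` S \<subseteq> Om"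
  shows "smooth_on b Om \<Longrightarrow> Ck_on k (\<lambda>x. b (G x)) S"
proof (induction k arbitrary: b)
  case 0
  then show ?case
  proof -
    have "continuous_on Om b" "continuous_on S G"
      using 0 G unfolding smooth_on_def by (metis Ck_on.simps(1))+
    then show ?thesis using continuous_on_compose2[of Om b S G] GS by (simp only: Ck_on.simps)
  qed
next
  case (Suc k)
  have Gd: "(G has_derivative frechet_derivative G (at x)) (at x)" if "x \<in> S" for x
    using Ck_on_has_derivative[OF S _ that, of _ G] G unfolding smooth_on_def by blast
  have bd: "(b has_derivative frechet_derivative b (at y)) (at y)" if "y \<in> Om" for y
    using Ck_on_has_derivative[OF Om _ that, of _ b] Suc.prems unfolding smooth_on_def by blast
  show ?case
  proof (rule Ck_on_SucI[OF S, where f'="\<lambda>x v. \<Sum>j\<in>Basis. (frechet_derivative G (at x) v \<bullet> j) *\<^sub>R frechet_derivative b (at (G x)) j"])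
    fix x assume x: "x \<in> S"
    have "((b \<circ> G) has_derivative (frechet_derivative b (at (G x)) \<circ> frechet_derivative G (at x))) (at x)"
      using diff_chain_at[OF Gd[OF x] bd] x GS by blast
    moreover have lin: "linear (frechet_derivative b (at (G x)))"
      using bd x GS has_derivative_linear by blast
    have eq: "(frechet_derivative b (at (G x)) \<circ> frechet_derivative G (at x)) =
        (\<lambda>v. \<Sum>j\<in>Basis. (frechet_derivative G (at x) v \<bullet> j) *\<^sub>R frechet_derivative b (at (G x)) j)"
      by (rule ext, simp only: o_def, rule linear_basis_expand[OF lin])
    ultimately show "((\<lambda>x. b (G x)) has_derivative
        (\<lambda>v. \<Sum>j\<in>Basis. (frechet_derivative G (at x) v \<bullet> j) *\<^sub>R frechet_derivative b (at (G x)) j)) (at x)"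
      by (simp only: eq comp_def)
  next
    fix v
    show "Ck_on k (\<lambda>x. \<Sum>j\<in>Basis. (frechet_derivative G (at x) v \<bullet> j) *\<^sub>R frechet_derivative b (at (G x)) j) S"
    proof (rule Ck_on_sum[OF S finite_Basis])
      fix j :: 'b assume "j \<in> Basis"
      have "Ck_on k (\<lambda>x. frechet_derivative G (at x) v \<bullet> j) S"
        using Ck_on_linear[OF bounded_linear_inner_left S, of k "\<lambda>x. frechet_derivative G (at x) v" j] G
        unfolding smooth_on_def by (metis Ck_on_Suc_D)
      moreover have "Ck_on k (\<lambda>x. frechet_derivative b (at (G x)) j) S"
        using Suc.IH[of "\<lambda>y. frechet_derivative b (at y) j"] Suc.prems unfolding smooth_on_def by (metis Ck_on_Suc_D)
      ultimately show "Ck_on k (\<lambda>x. (frechet_derivative G (at x) v \<bullet> j) *\<^sub>R frechet_derivative b (at (G x)) j) S"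
        using Ck_on_bilinear[OF bounded_bilinear_scaleR S] by blast
    qed
  qed
qed

lemma smooth_on_compose:
  fixes G :: "'a::real_normed_vector \<Rightarrow> 'b::euclidean_space" and b :: "'b \<Rightarrow> 'c::real_normed_vector"
  assumes "open S" "open Om" "smooth_on G S" "G ` S \<subseteq> Om" "smooth_on b Om"
  shows "smooth_on (\<lambda>x. b (G x)) S"
  using Ck_on_compose[OF assms] by (simp add: smooth_on_def)

lemma smooth_on_const: "smooth_on (\<lambda>x. c) S"
  by (simp add: smooth_on_def Ck_on_const)

lemma smooth_on_add: "open S \<Longrightarrow> smooth_on f S \<Longrightarrow> smooth_on g S \<Longrightarrow> smooth_on (\<lambda>x. f x + g x) S"
  by (simp add: smooth_on_def Ck_on_add)

lemma smooth_on_sum: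
  fixes F :: "'i \<Rightarrow> 'a::real_normed_vector \<Rightarrow> 'b::real_normed_vector"
  shows "open S \<Longrightarrow> finite I \<Longrightarrow> (\<And>i. i \<in> I \<Longrightarrow> smooth_on (F i) S) \<Longrightarrow> smooth_on (\<lambda>x. \<Sum>i\<in>I. F i x) S"
  by (simp add: smooth_on_def Ck_on_sum)

lemma smooth_on_linear: "bounded_linear L \<Longrightarrow> open S \<Longrightarrow> smooth_on f S \<Longrightarrow> smooth_on (\<lambda>x. L (f x)) S"
  by (simp add: smooth_on_def Ck_on_linear)

lemma smooth_on_bilinear:
  fixes prod :: "'b::real_normed_vector \<Rightarrow> 'c::real_normed_vector \<Rightarrow> 'd::real_normed_vector"
    and f :: "'a::real_normed_vector \<Rightarrow> 'b" and g :: "'a \<Rightarrow> 'c"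
  shows "bounded_bilinear prod \<Longrightarrow> open S \<Longrightarrow> smooth_on f S \<Longrightarrow> smooth_on g S \<Longrightarrow> smooth_on (\<lambda>x. prod (f x) (g x)) S"
  by (simp add: smooth_on_def Ck_on_bilinear)

lemma smooth_on_mult:
  fixes f g :: "'a::real_normed_vector \<Rightarrow> 'b::real_normed_algebra"
  shows "open S \<Longrightarrow> smooth_on f S \<Longrightarrow> smooth_on g S \<Longrightarrow> smooth_on (\<lambda>x. f x * g x) S"
  using smooth_on_bilinear[OF bounded_bilinear_mult] by blast

lemma smooth_on_cong: "open S \<Longrightarrow> (\<And>x. x \<in> S \<Longrightarrow> f x = g x) \<Longrightarrow> smooth_on f S \<Longrightarrow> smooth_on g S"
  unfolding smooth_on_def using Ck_on_cong by blast

lemma smooth_on_subset: "smooth_on f S \<Longrightarrow> T \<subseteq> S \<Longrightarrow> smooth_on f T"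
  unfolding smooth_on_def using Ck_on_subset by blast

lemma smooth_on_local:
  assumes "open S" "\<And>x. x \<in> S \<Longrightarrow> \<exists>N. open N \<and> x \<in> N \<and> smooth_on f N"
  shows "smooth_on f S"
  unfolding smooth_on_def
proof
  fix k show "Ck_on k f S"
  proof (rule Ck_on_local[OF assms(1)])
    fix x assume "x \<in> S"
    then obtain N where "open N" "x \<in> N" "smooth_on f N" using assms(2) by blast
    then show "\<exists>N. open N \<and> x \<in> N \<and> Ck_on k f N" unfolding smooth_on_def by blast
  qed
qed

lemma smooth_on_SucI:
  assumes "open S" "\<And>x. x \<in> S \<Longrightarrow> (f has_derivative f' x) (at x)"
    "\<And>v. smooth_on (\<lambda>x. f' x v) S" "continuous_on S f"
  shows "smooth_on f S"
  unfolding smooth_on_def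
proof
  fix k show "Ck_on k f S"
  proof (cases k)
    case 0
    then show ?thesis using assms(4) by simp
  next
    case (Suc m)
    have h: "Ck_on m (\<lambda>x. f' x v) S" for v using assms(3)[of v] unfolding smooth_on_def by (rule spec)
    have "Ck_on (Suc m) f S" by (rule Ck_on_SucI[OF assms(1,2)], assumption, rule h)
    then show ?thesis unfolding Suc .
  qed
qed



lemma smooth_on_id: "smooth_on (\<lambda>x. x) S"
proof -
  have "smooth_on (\<lambda>x. x) UNIV"
    by (rule smooth_on_SucI[where f'="\<lambda>x v. v"]) (auto intro: has_derivative_ident smooth_on_const)
  then show ?thesis using smooth_on_subset by blast
qed

lemma smooth_on_uminus: "open S \<Longrightarrow> smooth_on f S \<Longrightarrow> smooth_on (\<lambda>x. - f x) S"
  using smooth_on_linear[OF bounded_linear_minus[OF bounded_linear_ident]] by blast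

lemma smooth_on_diff: "open S \<Longrightarrow> smooth_on f S \<Longrightarrow> smooth_on g S \<Longrightarrow> smooth_on (\<lambda>x. f x - g x) S"
  using smooth_on_add[of S f "\<lambda>x. - g x"] smooth_on_uminus[of S g] by simp

lemma inv_pow_deriv:
  fixes z c :: complex
  assumes "z \<noteq> 0"
  shows "((\<lambda>z. c * inverse z ^ m) has_field_derivative (- c * of_nat m * inverse z ^ Suc m)) (at z)"
  using assms
  apply (cases m)
   apply (auto intro!: derivative_eq_intros)[1]
  apply (auto intro!: derivative_eq_intros simp: field_simps power_Suc)
  apply (case_tac nat, auto)
  done

lemma inv_pow_Ck: "Ck_on k (\<lambda>z::complex. c * inverse z ^ m) (- {0})"
proof (induction k arbitrary: c m)
  case 0
  have "continuous_on (- {0}) (\<lambda>z::complex. c * inverse z ^ m)"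
    by (intro continuous_intros) auto
  then show ?case by simp
next
  case (Suc k)
  show ?case
  proof (rule Ck_on_SucI[where f'="\<lambda>z v. (- c * of_nat m * inverse z ^ Suc m) * v"])
    show "open (- {0::complex})" by auto
    fix z :: complex assume "z \<in> - {0}"
    then show "((\<lambda>z. c * inverse z ^ m) has_derivative (*) (- c * of_nat m * inverse z ^ Suc m)) (at z)"
      using inv_pow_deriv has_field_derivative_imp_has_derivative by blast
  next
    fix v :: complex
    have "Ck_on k (\<lambda>z::complex. (v * (- c * of_nat m)) * inverse z ^ Suc m) (- {0})" by (rule Suc.IH)
    then show "Ck_on k (\<lambda>z. - c * of_nat m * inverse z ^ Suc m * v) (- {0})"
      by (rule Ck_on_cong[rotated 2]) (auto simp: algebra_simps)
  qed
qed

lemma smooth_inverse: "smooth_on (\<lambda>z::complex. inverse z) (- {0})"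
proof -
  have "smooth_on (\<lambda>z::complex. 1 * inverse z ^ 1) (- {0})"
    by (simp only: smooth_on_def inv_pow_Ck, simp)
  then show ?thesis by simp
qed

section \<open>The flat function\<close>

definition hp :: "real poly \<Rightarrow> real \<Rightarrow> real" where
  "hp p t = (if 0 < t then poly p (inverse t) * exp (- inverse t) else 0)"

definition Dp :: "real poly \<Rightarrow> real poly" where
  "Dp p = [:0, 0, 1:] * (p - pderiv p)"

lemma poly_exp_at_top: "((\<lambda>s. poly (q::real poly) s * exp (- s)) \<longlongrightarrow> 0) at_top"
proof -
  have eq: "poly q s * exp (- s) = (\<Sum>i\<le>degree q. coeff q i * (s ^ i / exp s))" for s :: real
    by (simp add: poly_altdef sum_distrib_right exp_minus divide_inverse mult.assoc)
  have "((\<lambda>s. \<Sum>i\<le>degree q. coeff q i * (s ^ i / exp s)) \<longlongrightarrow> 0) at_top"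
    by (intro tendsto_null_sum tendsto_mult_right_zero tendsto_power_div_exp_0)
  then show ?thesis by (simp only: eq)
qed

lemma poly_exp_at_right: "((\<lambda>y. poly q (inverse y) * exp (- inverse y)) \<longlongrightarrow> 0) (at_right (0::real))"
  using filterlim_compose[OF poly_exp_at_top filterlim_inverse_at_top_right] by (simp add: o_def)

lemma hp_deriv: "(hp p has_real_derivative hp (Dp p) t) (at t)"
proof (cases "0 < t")
  case True
  have i: "((\<lambda>t. inverse t) has_real_derivative - (inverse t ^ 2)) (at t)"
    using DERIV_inverse[of t UNIV] True by (simp add: power2_eq_square)
  have a: "((\<lambda>t. poly p (inverse t)) has_real_derivative poly (pderiv p) (inverse t) * (- (inverse t ^ 2))) (at t)"
    by (rule DERIV_chain2[OF poly_DERIV i])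
  have b: "((\<lambda>t. exp (- inverse t)) has_real_derivative exp (- inverse t) * (inverse t ^ 2)) (at t)"
    using DERIV_chain2[OF DERIV_exp DERIV_minus[OF i]] by simp
  have d: "((\<lambda>t. poly p (inverse t) * exp (- inverse t)) has_real_derivative
      (poly (pderiv p) (inverse t) * (- (inverse t ^ 2)) * exp (- inverse t) +
       poly p (inverse t) * (exp (- inverse t) * (inverse t ^ 2)))) (at t)"
    by (rule DERIV_cong[OF DERIV_mult[OF a b]]) (simp add: mult_ac)
  have "poly (pderiv p) (inverse t) * (- (inverse t ^ 2)) * exp (- inverse t) +
       poly p (inverse t) * (exp (- inverse t) * (inverse t ^ 2)) = hp (Dp p) t"
    using True by (simp add: hp_def Dp_def algebra_simps power2_eq_square)
  then have d2: "((\<lambda>t. poly p (inverse t) * exp (- inverse t)) has_real_derivative hp (Dp p) t) (at t)"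
    using d by simp
  show ?thesis
    by (rule has_field_derivative_transform_within_open[OF d2, of "{0<..}"]) (use True in \<open>auto simp: hp_def\<close>)
next
  case False
  show ?thesis
  proof (cases "t < 0")
    case True
    have "((\<lambda>t. 0) has_real_derivative 0) (at t)" by simp
    then have "((\<lambda>t. 0) has_real_derivative hp (Dp p) t) (at t)" using True by (simp add: hp_def)
    then show ?thesis
      by (rule has_field_derivative_transform_within_open[of _ _ _ "{..<0}"]) (use True in \<open>auto simp: hp_def\<close>)
  next
    case False
    with \<open>\<not> 0 < t\<close> have t0: "t = 0" by simp
    have lr: "((\<lambda>y. hp p y / y) \<longlongrightarrow> 0) (at_right (0::real))"
    proof -
      have "((\<lambda>y. poly (pCons 0 p) (inverse y) * exp (- inverse y)) \<longlongrightarrow> 0) (at_right (0::real))"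
        by (rule poly_exp_at_right)
      moreover have "eventually (\<lambda>y. poly (pCons 0 p) (inverse y) * exp (- inverse y) = hp p y / y) (at_right (0::real))"
        unfolding eventually_at_right_field
        by (rule exI[of _ 1]) (auto simp: hp_def divide_inverse mult_ac)
      ultimately show ?thesis by (rule Lim_transform_eventually)
    qed
    have ll: "((\<lambda>y. hp p y / y) \<longlongrightarrow> 0) (at_left (0::real))"
    proof -
      have "eventually (\<lambda>y. 0 = hp p y / y) (at_left (0::real))"
        unfolding eventually_at_left_field
        by (rule exI[of _ "-1"]) (auto simp: hp_def)
      then show ?thesis by (rule Lim_transform_eventually[OF tendsto_const])
    qed
    have "((\<lambda>y. hp p y / y) \<longlongrightarrow> 0) (at (0::real))"
      using lr ll by (simp add: filterlim_at_split)
    then have "((\<lambda>y. (hp p y - hp p 0) / (y - 0)) \<longlongrightarrow> hp (Dp p) 0) (at (0::real))"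
      by (simp add: hp_def)
    then show ?thesis unfolding t0 has_field_derivative_iff by simp
  qed
qed

lemma hp_Ck: "Ck_on k (hp p) UNIV"
proof (induction k arbitrary: p)
  case 0
  have "continuous_on UNIV (hp p)"
    using hp_deriv DERIV_isCont continuous_at_imp_continuous_on by blast
  then show ?case by simp
next
  case (Suc k)
  show ?case
  proof (rule Ck_on_SucI[where f'="\<lambda>t v. hp (Dp p) t * v"])
    show "open (UNIV :: real set)" by simp
    fix t :: real
    show "(hp p has_derivative (*) (hp (Dp p) t)) (at t)"
      using hp_deriv has_field_derivative_imp_has_derivative by blast
  next
    fix v :: real
    show "Ck_on k (\<lambda>t. hp (Dp p) t * v) UNIV"
      using Ck_on_linear[OF bounded_linear_mult_left, of UNIV k "hp (Dp p)" v] Suc.IH by simp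
  qed
qed

lemma hp_smooth: "smooth_on (hp p) UNIV"
  by (simp add: smooth_on_def hp_Ck)

lemma hp_one_pos: "0 < t \<Longrightarrow> 0 < hp 1 t" and hp_one_zero: "t \<le> 0 \<Longrightarrow> hp 1 t = 0"
  by (auto simp: hp_def)

section \<open>Bump functions on euclidean spaces\<close>

definition bump :: "'a::euclidean_space \<Rightarrow> real \<Rightarrow> 'a \<Rightarrow> complex" where
  "bump c r y = complex_of_real (hp 1 (r\<^sup>2 - (y - c) \<bullet> (y - c)))"

lemma bump_smooth: "smooth_on (bump c r) UNIV"
proof -
  have G: "smooth_on (\<lambda>y::'a. r\<^sup>2 - (y - c) \<bullet> (y - c)) UNIV"
    by (intro smooth_on_diff smooth_on_const smooth_on_bilinear[OF bounded_bilinear_inner] smooth_on_id) auto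
  have "smooth_on (\<lambda>y::'a. hp 1 (r\<^sup>2 - (y - c) \<bullet> (y - c))) UNIV"
    by (rule smooth_on_compose[OF _ _ G _ hp_smooth]) auto
  then show ?thesis unfolding bump_def
    by (rule smooth_on_linear[OF bounded_linear_of_real, rotated]) simp
qed

lemma bump_nonzero_iff:
  assumes "0 < r"
  shows "bump c r y \<noteq> 0 \<longleftrightarrow> y \<in> ball c r"
proof -
  have "(y - c) \<bullet> (y - c) = (dist y c)\<^sup>2"
    by (simp add: dist_norm power2_norm_eq_inner)
  moreover have "(dist y c)\<^sup>2 < r\<^sup>2 \<longleftrightarrow> dist y c < r"
    using assms by (smt (verit) power_mono zero_le_dist power_strict_mono pos2)
  ultimately show ?thesis
    by (auto simp: bump_def hp_def dist_commute mem_ball)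
qed

lemma bump_real: "bump c r y = complex_of_real (Re (bump c r y))" and bump_nonneg: "0 \<le> Re (bump c r y)"
  by (auto simp: bump_def hp_def)



definition sfo :: "('m::topological_space set \<times> ('m \<Rightarrow> real^'n)) set \<Rightarrow> ('m \<Rightarrow> complex) \<Rightarrow> 'm set \<Rightarrow> bool" where
  "sfo A u N \<longleftrightarrow> (\<forall>(V,\<psi>)\<in>A. smooth_on (u \<circ> inv_into V \<psi>) (\<psi> ` (V \<inter> N)))"

lemma atlas_chart: "smooth_atlas A \<Longrightarrow> (U,\<phi>) \<in> A \<Longrightarrow> is_chart U \<phi>"
  unfolding smooth_atlas_def by blast

lemma atlas_cover: "smooth_atlas A \<Longrightarrow> \<exists>U \<phi>. (U,\<phi>) \<in> A \<and> x \<in> U"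
  unfolding smooth_atlas_def by blast

lemma atlas_trans: "smooth_atlas A \<Longrightarrow> (U,\<phi>) \<in> A \<Longrightarrow> (V,\<psi>) \<in> A \<Longrightarrow> smooth_on (\<psi> \<circ> inv_into U \<phi>) (\<phi> ` (U \<inter> V))"
  unfolding smooth_atlas_def by blast

lemma chart_hom: "is_chart U \<phi> \<Longrightarrow> homeomorphism U (\<phi> ` U) \<phi> (inv_into U \<phi>)"
  unfolding is_chart_def by blast

lemma chart_inv: "is_chart U \<phi> \<Longrightarrow> x \<in> U \<Longrightarrow> inv_into U \<phi> (\<phi> x) = x"
  using chart_hom unfolding homeomorphism_def by blast

lemma chart_inv2: "is_chart U \<phi> \<Longrightarrow> z \<in> \<phi> ` U \<Longrightarrow> inv_into U \<phi> z \<in> U \<and> \<phi> (inv_into U \<phi> z) = z"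
  using chart_hom unfolding homeomorphism_def by blast

lemma chart_open:
  assumes "is_chart U \<phi>" "open N"
  shows "open (\<phi> ` (U \<inter> N))"
proof -
  have "openin (top_of_set U) (U \<inter> N)"
    using assms(2) by (simp add: openin_open_Int)
  then have "openin (top_of_set (\<phi> ` U)) (\<phi> ` (U \<inter> N))"
    using homeomorphism_imp_open_map[OF chart_hom[OF assms(1)]] by blast
  then show ?thesis
    using openin_open_trans assms(1) unfolding is_chart_def by blast
qed

lemma smooth_fun_sfo: "smooth_fun A u \<longleftrightarrow> sfo A u UNIV"
  unfolding smooth_fun_def sfo_def by simp

lemma sfo_subset: "sfo A u N \<Longrightarrow> N' \<subseteq> N \<Longrightarrow> sfo A u N'"
  unfolding sfo_def
  by (force intro: smooth_on_subset)

lemma smooth_fun_sfo_any: "smooth_fun A u \<Longrightarrow> sfo A u N"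
  using sfo_subset smooth_fun_sfo by blast

lemma sfo_cong:
  assumes A: "smooth_atlas A" and N: "open N" and eq: "\<And>x. x \<in> N \<Longrightarrow> u x = v x" and u: "sfo A u N"
  shows "sfo A v N"
  unfolding sfo_def
proof (clarify)
  fix V \<psi> assume V: "(V, \<psi>) \<in> A"
  have ch: "is_chart V \<psi>" using atlas_chart[OF A V] .
  show "smooth_on (v \<circ> inv_into V \<psi>) (\<psi> ` (V \<inter> N))"
  proof (rule smooth_on_cong[OF chart_open[OF ch N]])
    show "smooth_on (u \<circ> inv_into V \<psi>) (\<psi> ` (V \<inter> N))" using u V unfolding sfo_def by blast
    fix z assume "z \<in> \<psi> ` (V \<inter> N)"
    then obtain x where x: "x \<in> V" "x \<in> N" "z = \<psi> x" by blast
    then show "(u \<circ> inv_into V \<psi>) z = (v \<circ> inv_into V \<psi>) z"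
      using chart_inv[OF ch x(1)] eq by simp
  qed
qed

lemma sfo_local:
  assumes A: "smooth_atlas A" and loc: "\<And>x. \<exists>N. open N \<and> x \<in> N \<and> sfo A u N"
  shows "smooth_fun A u"
  unfolding smooth_fun_def
proof (clarify)
  fix V \<psi> assume V: "(V, \<psi>) \<in> A"
  have ch: "is_chart V \<psi>" using atlas_chart[OF A V] .
  show "smooth_on (u \<circ> inv_into V \<psi>) (\<psi> ` V)"
  proof (rule smooth_on_local)
    show "open (\<psi> ` V)" using ch unfolding is_chart_def by blast
    fix z assume z: "z \<in> \<psi> ` V"
    obtain N where N: "open N" "inv_into V \<psi> z \<in> N" "sfo A u N" using loc by blast
    have "z \<in> \<psi> ` (V \<inter> N)"
      using chart_inv2[OF ch z] N(2) by (metis IntI image_eqI)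
    moreover have "smooth_on (u \<circ> inv_into V \<psi>) (\<psi> ` (V \<inter> N))" using N(3) V unfolding sfo_def by blast
    ultimately show "\<exists>N. open N \<and> z \<in> N \<and> smooth_on (u \<circ> inv_into V \<psi>) N"
      using chart_open[OF ch N(1)] by blast
  qed
qed

lemma sfo_const: "sfo A (\<lambda>x. c) N"
  unfolding sfo_def by (simp add: o_def smooth_on_const)

lemma sfo_add:
  assumes A: "smooth_atlas A" and N: "open N" and "sfo A u N" "sfo A v N"
  shows "sfo A (\<lambda>x. u x + v x) N"
  unfolding sfo_def
proof (clarify)
  fix V \<psi> assume V: "(V, \<psi>) \<in> A"
  have ch: "is_chart V \<psi>" using atlas_chart[OF A V] .
  have "smooth_on (\<lambda>z. (u \<circ> inv_into V \<psi>) z + (v \<circ> inv_into V \<psi>) z) (\<psi> ` (V \<inter> N))"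
    using smooth_on_add[OF chart_open[OF ch N]] assms(3,4) V unfolding sfo_def by blast
  then show "smooth_on ((\<lambda>x. u x + v x) \<circ> inv_into V \<psi>) (\<psi> ` (V \<inter> N))" by (simp add: o_def)
qed

lemma sfo_mult:
  assumes A: "smooth_atlas A" and N: "open N" and "sfo A u N" "sfo A v N"
  shows "sfo A (\<lambda>x. u x * v x) N"
  unfolding sfo_def
proof (clarify)
  fix V \<psi> assume V: "(V, \<psi>) \<in> A"
  have ch: "is_chart V \<psi>" using atlas_chart[OF A V] .
  have "smooth_on (\<lambda>z. (u \<circ> inv_into V \<psi>) z * (v \<circ> inv_into V \<psi>) z) (\<psi> ` (V \<inter> N))"
    using smooth_on_mult[OF chart_open[OF ch N]] assms(3,4) V unfolding sfo_def by blast
  then show "smooth_on ((\<lambda>x. u x * v x) \<circ> inv_into V \<psi>) (\<psi> ` (V \<inter> N))" by (simp add: o_def)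
qed

lemma sfo_linear:
  assumes A: "smooth_atlas A" and N: "open N" and L: "bounded_linear L" and "sfo A u N"
  shows "sfo A (\<lambda>x. L (u x)) N"
  unfolding sfo_def
proof (clarify)
  fix V \<psi> assume V: "(V, \<psi>) \<in> A"
  have ch: "is_chart V \<psi>" using atlas_chart[OF A V] .
  have "smooth_on (\<lambda>z. L ((u \<circ> inv_into V \<psi>) z)) (\<psi> ` (V \<inter> N))"
    using smooth_on_linear[OF L chart_open[OF ch N]] assms(4) V unfolding sfo_def by blast
  then show "smooth_on ((\<lambda>x. L (u x)) \<circ> inv_into V \<psi>) (\<psi> ` (V \<inter> N))" by (simp add: o_def)
qed

lemma sfo_inverse:
  assumes A: "smooth_atlas A" and N: "open N" and u: "sfo A u N" and nz: "\<And>x. x \<in> N \<Longrightarrow> u x \<noteq> 0"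
  shows "sfo A (\<lambda>x. inverse (u x)) N"
  unfolding sfo_def
proof (clarify)
  fix V \<psi> assume V: "(V, \<psi>) \<in> A"
  have ch: "is_chart V \<psi>" using atlas_chart[OF A V] .
  have img: "(u \<circ> inv_into V \<psi>) ` (\<psi> ` (V \<inter> N)) \<subseteq> - {0}"
    using nz chart_inv[OF ch] by auto
  have "smooth_on (\<lambda>z. inverse ((u \<circ> inv_into V \<psi>) z)) (\<psi> ` (V \<inter> N))"
    by (rule smooth_on_compose[OF chart_open[OF ch N] _ _ img smooth_inverse])
       (use u V in \<open>auto simp: sfo_def\<close>)
  then show "smooth_on ((\<lambda>x. inverse (u x)) \<circ> inv_into V \<psi>) (\<psi> ` (V \<inter> N))" by (simp add: o_def)
qed

lemma smooth_fun_add: "smooth_atlas A \<Longrightarrow> smooth_fun A u \<Longrightarrow> smooth_fun A v \<Longrightarrow> smooth_fun A (\<lambda>x. u x + v x)"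
  by (simp add: smooth_fun_sfo sfo_add)

lemma smooth_fun_mult: "smooth_atlas A \<Longrightarrow> smooth_fun A u \<Longrightarrow> smooth_fun A v \<Longrightarrow> smooth_fun A (\<lambda>x. u x * v x)"
  by (simp add: smooth_fun_sfo sfo_mult)

lemma smooth_fun_const: "smooth_fun A (\<lambda>x. c)"
  unfolding smooth_fun_def by (simp add: o_def smooth_on_const)

lemma smooth_fun_cnj: "smooth_atlas A \<Longrightarrow> smooth_fun A u \<Longrightarrow> smooth_fun A (\<lambda>x. cnj (u x))"
  by (simp add: smooth_fun_sfo sfo_linear bounded_linear_cnj)

lemma smooth_fun_cmult: "smooth_atlas A \<Longrightarrow> smooth_fun A u \<Longrightarrow> smooth_fun A (\<lambda>x. c * u x)"
  by (rule smooth_fun_mult[OF _ smooth_fun_const])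

lemma smooth_fun_sum:
  assumes "smooth_atlas A" "finite I" "\<And>i. i \<in> I \<Longrightarrow> smooth_fun A (F i)"
  shows "smooth_fun A (\<lambda>x. \<Sum>i\<in>I. F i x)"
  using assms(2,3)
proof (induction I rule: finite_induct)
  case empty
  then show ?case by (simp add: smooth_fun_const)
next
  case (insert i I)
  then show ?case by (simp add: smooth_fun_add[OF assms(1)])
qed

lemma tsupp_nz: "u x \<noteq> 0 \<Longrightarrow> x \<in> tsupp u"
  unfolding tsupp_def by (rule closure_subset[THEN subsetD]) simp

lemma notin_tsupp: "x \<notin> tsupp u \<Longrightarrow> u x = 0"
  by (metis tsupp_nz)

lemma closed_tsupp: "closed (tsupp u)"
  unfolding tsupp_def by simp

lemma tsupp_mono: "(\<And>x. u x \<noteq> 0 \<Longrightarrow> v x \<noteq> 0) \<Longrightarrow> tsupp u \<subseteq> tsupp v"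
  unfolding tsupp_def by (intro closure_mono) auto

lemma tsupp_zero: "tsupp (\<lambda>x. 0) = {}"
  unfolding tsupp_def by simp

lemma compact_tsupp_sub: "compact K \<Longrightarrow> tsupp u \<subseteq> K \<Longrightarrow> compact (tsupp u)"
  using compact_Int_closed[OF _ closed_tsupp, of K u] by (simp add: Int_absorb1)

section \<open>Bump functions on the manifold\<close>

lemma manifold_bump:
  fixes A :: "('m::t2_space set \<times> ('m \<Rightarrow> real^'n)) set"
  assumes A: "smooth_atlas A" and S: "open S" and xS: "x \<in> S"
  shows "\<exists>\<beta> W. smooth_fun A \<beta> \<and> (\<forall>y. \<beta> y = complex_of_real (Re (\<beta> y)) \<and> 0 \<le> Re (\<beta> y)) \<and>
    open W \<and> x \<in> W \<and> (\<forall>y\<in>W. 0 < Re (\<beta> y)) \<and> compact (tsupp \<beta>) \<and> tsupp \<beta> \<subseteq> S"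
proof -
  obtain U \<phi> where U: "(U, \<phi>) \<in> A" "x \<in> U" using atlas_cover[OF A] by blast
  have ch: "is_chart U \<phi>" using atlas_chart[OF A U(1)] .
  have "open (\<phi> ` (U \<inter> S))" by (rule chart_open[OF ch S])
  moreover have "\<phi> x \<in> \<phi> ` (U \<inter> S)" using U xS by blast
  ultimately obtain r where r: "r > 0" "cball (\<phi> x) r \<subseteq> \<phi> ` (U \<inter> S)"
    unfolding open_contains_cball by blast
  define b where "b = bump (\<phi> x) r"
  define \<beta> where "\<beta> y = (if y \<in> U then b (\<phi> y) else 0)" for y
  define C where "C = inv_into U \<phi> ` cball (\<phi> x) r"
  have hom: "homeomorphism U (\<phi> ` U) \<phi> (inv_into U \<phi>)" by (rule chart_hom[OF ch])
  have CUS: "C \<subseteq> U \<inter> S"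
  proof
    fix y assume "y \<in> C"
    then obtain z where z: "z \<in> cball (\<phi> x) r" "y = inv_into U \<phi> z" unfolding C_def by blast
    then obtain w where "w \<in> U \<inter> S" "z = \<phi> w" using r(2) by blast
    then show "y \<in> U \<inter> S" using z chart_inv[OF ch] by auto
  qed
  have cC: "compact C"
  proof -
    have "continuous_on (\<phi> ` U) (inv_into U \<phi>)" using hom unfolding homeomorphism_def by blast
    moreover have "cball (\<phi> x) r \<subseteq> \<phi> ` U" using r(2) by blast
    ultimately have "continuous_on (cball (\<phi> x) r) (inv_into U \<phi>)" by (rule continuous_on_subset)
    then show ?thesis unfolding C_def by (rule compact_continuous_image) simp
  qed
  then have clC: "closed C" by (rule compact_imp_closed)
  have nzC: "\<beta> y \<noteq> 0 \<Longrightarrow> y \<in> C" for y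
  proof -
    assume "\<beta> y \<noteq> 0"
    then have "y \<in> U" "b (\<phi> y) \<noteq> 0" unfolding \<beta>_def by (auto split: if_splits)
    then have "\<phi> y \<in> ball (\<phi> x) r" using bump_nonzero_iff[OF r(1)] unfolding b_def by blast
    then have "\<phi> y \<in> cball (\<phi> x) r" by simp
    then show "y \<in> C" unfolding C_def using chart_inv[OF ch \<open>y \<in> U\<close>] by (metis image_eqI)
  qed
  have tsC: "tsupp \<beta> \<subseteq> C"
    unfolding tsupp_def using nzC clC by (intro closure_minimal) auto
  define W where "W = \<phi> -` ball (\<phi> x) r \<inter> U"
  have oW: "open W"
  proof -
    have "continuous_on U \<phi>" using hom unfolding homeomorphism_def by blast
    moreover have "open U" using ch unfolding is_chart_def by blast
    ultimately show ?thesis unfolding W_def using continuous_on_open_vimage[of U \<phi>] open_ball by blast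
  qed
  have xW: "x \<in> W" unfolding W_def using U r(1) by simp
  have real: "\<beta> y = complex_of_real (Re (\<beta> y)) \<and> 0 \<le> Re (\<beta> y)" for y
  proof (cases "y \<in> U")
    case True
    then show ?thesis unfolding \<beta>_def b_def using bump_real[of "\<phi> x" r "\<phi> y"] bump_nonneg[of "\<phi> x" r "\<phi> y"]
      by (simp del: bump_real)
  next
    case False
    then show ?thesis unfolding \<beta>_def by simp
  qed
  have pos: "0 < Re (\<beta> y)" if "y \<in> W" for y
  proof -
    have "b (\<phi> y) \<noteq> 0" using that bump_nonzero_iff[OF r(1)] unfolding W_def b_def by auto
    then have "\<beta> y \<noteq> 0" using that unfolding W_def \<beta>_def by auto
    then have "Re (\<beta> y) \<noteq> 0" using real[of y] by (metis of_real_0)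
    then show ?thesis using real[of y] by linarith
  qed
  have sm: "smooth_fun A \<beta>"
  proof (rule sfo_local[OF A])
    fix y
    show "\<exists>N. open N \<and> y \<in> N \<and> sfo A \<beta> N"
    proof (cases "y \<in> U")
      case True
      have "sfo A \<beta> U"
        unfolding sfo_def
      proof (clarify)
        fix V \<psi> assume V: "(V, \<psi>) \<in> A"
        have chV: "is_chart V \<psi>" using atlas_chart[OF A V] .
        have oU: "open U" using ch unfolding is_chart_def by blast
        have "smooth_on (\<lambda>z. b ((\<phi> \<circ> inv_into V \<psi>) z)) (\<psi> ` (V \<inter> U))"
          unfolding b_def
          by (rule smooth_on_compose[OF chart_open[OF chV oU] open_UNIV atlas_trans[OF A V U(1)] subset_UNIV bump_smooth])
        then show "smooth_on (\<beta> \<circ> inv_into V \<psi>) (\<psi> ` (V \<inter> U))"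
          by (rule smooth_on_cong[OF chart_open[OF chV oU], rotated])
             (auto simp: \<beta>_def chart_inv[OF chV])
      qed
      then show ?thesis using True ch unfolding is_chart_def by blast
    next
      case False
      then have "y \<in> - C" using CUS by blast
      moreover have "sfo A \<beta> (- C)"
        by (rule sfo_cong[OF A _ _ sfo_const[of A 0]]) (use clC nzC in auto)
      ultimately show ?thesis using clC by blast
    qed
  qed
  show ?thesis
    apply (rule exI[of _ \<beta>], rule exI[of _ W])
    using sm real oW xW pos compact_tsupp_sub[OF cC tsC] tsC CUS by blast
qed


lemma split_fun:
  fixes A :: "('m::t2_space set \<times> ('m \<Rightarrow> real^'n)) set"
  assumes A: "smooth_atlas A" and u: "smooth_fun A u" and cu: "compact (tsupp u)"
    and cov: "\<And>x. x \<in> tsupp u \<Longrightarrow> \<exists>S. open S \<and> x \<in> S \<and> P S"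
  shows "\<exists>(D::'m set) pc SS. finite D \<and> (\<forall>d\<in>D. smooth_fun A (pc d) \<and> compact (tsupp (pc d)) \<and> P (SS d) \<and> tsupp (pc d) \<subseteq> SS d)
      \<and> (\<forall>y. u y = (\<Sum>d\<in>D. pc d y))"
proof -
  define K where "K = tsupp u"
  have "\<forall>x\<in>K. \<exists>S. open S \<and> x \<in> S \<and> P S" using cov unfolding K_def by blast
  then have "\<exists>SS. \<forall>x\<in>K. open (SS x) \<and> x \<in> SS x \<and> P (SS x)" by (rule bchoice)
  then obtain SS where SS: "\<forall>x\<in>K. open (SS x) \<and> x \<in> SS x \<and> P (SS x)" by (elim exE)
  have "\<forall>x\<in>K. \<exists>\<beta> W. smooth_fun A \<beta> \<and> (\<forall>y. \<beta> y = complex_of_real (Re (\<beta> y)) \<and> 0 \<le> Re (\<beta> y)) \<and>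
    open W \<and> x \<in> W \<and> (\<forall>y\<in>W. 0 < Re (\<beta> y)) \<and> compact (tsupp \<beta>) \<and> tsupp \<beta> \<subseteq> SS x"
  proof
    fix x assume "x \<in> K"
    then show "\<exists>\<beta> W. smooth_fun A \<beta> \<and> (\<forall>y. \<beta> y = complex_of_real (Re (\<beta> y)) \<and> 0 \<le> Re (\<beta> y)) \<and>
    open W \<and> x \<in> W \<and> (\<forall>y\<in>W. 0 < Re (\<beta> y)) \<and> compact (tsupp \<beta>) \<and> tsupp \<beta> \<subseteq> SS x"
      using SS by (intro manifold_bump[OF A]) auto
  qed
  then have "\<exists>\<beta>. \<forall>x\<in>K. \<exists>W. smooth_fun A (\<beta> x) \<and> (\<forall>y. \<beta> x y = complex_of_real (Re (\<beta> x y)) \<and> 0 \<le> Re (\<beta> x y)) \<and>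
    open W \<and> x \<in> W \<and> (\<forall>y\<in>W. 0 < Re (\<beta> x y)) \<and> compact (tsupp (\<beta> x)) \<and> tsupp (\<beta> x) \<subseteq> SS x"
    by (rule bchoice)
  then obtain \<beta> where "\<forall>x\<in>K. \<exists>W. smooth_fun A (\<beta> x) \<and> (\<forall>y. \<beta> x y = complex_of_real (Re (\<beta> x y)) \<and> 0 \<le> Re (\<beta> x y)) \<and>
    open W \<and> x \<in> W \<and> (\<forall>y\<in>W. 0 < Re (\<beta> x y)) \<and> compact (tsupp (\<beta> x)) \<and> tsupp (\<beta> x) \<subseteq> SS x"
    by (elim exE)
  then have "\<exists>W. \<forall>x\<in>K. smooth_fun A (\<beta> x) \<and> (\<forall>y. \<beta> x y = complex_of_real (Re (\<beta> x y)) \<and> 0 \<le> Re (\<beta> x y)) \<and>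
    open (W x) \<and> x \<in> W x \<and> (\<forall>y\<in>W x. 0 < Re (\<beta> x y)) \<and> compact (tsupp (\<beta> x)) \<and> tsupp (\<beta> x) \<subseteq> SS x"
    by (rule bchoice)
  then obtain W where BW: "\<forall>x\<in>K. smooth_fun A (\<beta> x) \<and> (\<forall>y. \<beta> x y = complex_of_real (Re (\<beta> x y)) \<and> 0 \<le> Re (\<beta> x y)) \<and>
    open (W x) \<and> x \<in> W x \<and> (\<forall>y\<in>W x. 0 < Re (\<beta> x y)) \<and> compact (tsupp (\<beta> x)) \<and> tsupp (\<beta> x) \<subseteq> SS x"
    by (elim exE)
  have opn: "\<And>T. T \<in> K \<Longrightarrow> open (W T)" using BW by blast
  have cov': "K \<subseteq> (\<Union>c\<in>K. W c)" using BW by blast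
  obtain D where D: "D \<subseteq> K" "finite D" "K \<subseteq> (\<Union>c\<in>D. W c)"
    by (rule compactE_image[OF cu[folded K_def] opn cov'])
  define Wall where "Wall = (\<Union>c\<in>D. W c)"
  define \<Sigma> where "\<Sigma> y = (\<Sum>x\<in>D. \<beta> x y)" for y
  have oWall: "open Wall" unfolding Wall_def using BW D(1) by blast
  have Snz: "\<Sigma> y \<noteq> 0" if yW: "y \<in> Wall" for y
  proof -
    obtain x0 where x0: "x0 \<in> D" "y \<in> W x0" using yW unfolding Wall_def by blast
    have "Re (\<beta> x0 y) \<le> (\<Sum>x\<in>D. Re (\<beta> x y))"
      by (rule member_le_sum[OF x0(1) _ D(2)]) (use BW D(1) in blast)
    moreover have "0 < Re (\<beta> x0 y)" using BW D(1) x0 by blast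
    ultimately have "0 < Re (\<Sigma> y)" unfolding \<Sigma>_def by (simp add: Re_sum)
    then show ?thesis by auto
  qed
  have smS: "smooth_fun A \<Sigma>" unfolding \<Sigma>_def
    by (rule smooth_fun_sum[OF A D(2)]) (use BW D(1) in blast)
  define pc where "pc d y = (if y \<in> Wall then u y * \<beta> d y * inverse (\<Sigma> y) else 0)" for d y
  have uz: "u y = 0" if "y \<notin> Wall" for y
    using that D(3) notin_tsupp[of y u] unfolding Wall_def K_def by blast
  have KW: "K \<subseteq> Wall" using D(3) unfolding Wall_def .
  have props: "smooth_fun A (pc d) \<and> compact (tsupp (pc d)) \<and> P (SS d) \<and> tsupp (pc d) \<subseteq> SS d" if d: "d \<in> D" for d
  proof -
    have dK: "d \<in> K" using d D(1) by blast
    have bd: "smooth_fun A (\<beta> d)" "compact (tsupp (\<beta> d))" "tsupp (\<beta> d) \<subseteq> SS d"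
      using BW dK by blast+
    have ts: "tsupp (pc d) \<subseteq> tsupp (\<beta> d)"
      by (rule tsupp_mono) (auto simp: pc_def split: if_splits)
    have sm: "smooth_fun A (pc d)"
    proof (rule sfo_local[OF A])
      fix y
      show "\<exists>N. open N \<and> y \<in> N \<and> sfo A (pc d) N"
      proof (cases "y \<in> Wall")
        case True
        have "sfo A (\<lambda>y. u y * \<beta> d y * inverse (\<Sigma> y)) Wall"
          by (intro sfo_mult[OF A oWall] sfo_inverse[OF A oWall] smooth_fun_sfo_any u bd(1) smS Snz)
        then have "sfo A (pc d) Wall"
          by (rule sfo_cong[OF A oWall, rotated]) (simp add: pc_def)
        then show ?thesis using True oWall by blast
      next
        case False
        then have yK: "y \<in> - K" using KW by blast
        have "sfo A (pc d) (- K)"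
          by (rule sfo_cong[OF A _ _ sfo_const[of A 0]])
             (auto simp: K_def closed_tsupp pc_def notin_tsupp)
        then show ?thesis using yK closed_tsupp[of u] unfolding K_def by blast
      qed
    qed
    show ?thesis using sm ts bd compact_tsupp_sub[OF bd(2) ts] SS dK by blast
  qed
  have sum: "u y = (\<Sum>d\<in>D. pc d y)" for y
  proof (cases "y \<in> Wall")
    case True
    have "(\<Sum>d\<in>D. pc d y) = (\<Sum>d\<in>D. u y * \<beta> d y * inverse (\<Sigma> y))"
      using True by (simp add: pc_def)
    also have "\<dots> = u y * \<Sigma> y * inverse (\<Sigma> y)"
      by (simp add: \<Sigma>_def sum_distrib_left sum_distrib_right)
    also have "\<dots> = u y" using Snz[OF True] by simp
    finally show ?thesis by simp
  next
    case False
    then show ?thesis using uz by (simp add: pc_def)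
  qed
  show ?thesis
  proof (intro exI conjI)
    show "finite D" by (rule D(2))
    show "\<forall>d\<in>D. smooth_fun A (pc d) \<and> compact (tsupp (pc d)) \<and> P (SS d) \<and> tsupp (pc d) \<subseteq> SS d"
      using props by blast
    show "\<forall>y. u y = (\<Sum>d\<in>D. pc d y)" using sum by blast
  qed
qed



definition conv :: "(nat \<Rightarrow> nat \<Rightarrow> 'a::comm_monoid_add) \<Rightarrow> nat \<Rightarrow> 'a" where
  "conv T r = (\<Sum>i\<le>r. T i (r - i))"

lemma conv_cong: "(\<And>i j. T i j = U i j) \<Longrightarrow> conv T r = conv U r"
  by (simp add: conv_def)

lemma conv_assoc: "conv (\<lambda>a s. conv (\<lambda>b c. F a b c) s) r = conv (\<lambda>s c. conv (\<lambda>a b. F a b c) s) r"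
proof -
  have L: "conv (\<lambda>a s. conv (\<lambda>b c. F a b c) s) r = (\<Sum>(a,b)\<in>(SIGMA a:{..r}. {..r-a}). F a b (r-a-b))"
    by (simp add: conv_def sum.Sigma)
  have R: "conv (\<lambda>s c. conv (\<lambda>a b. F a b c) s) r = (\<Sum>(s,a)\<in>(SIGMA s:{..r}. {..s}). F a (s-a) (r-s))"
    by (simp add: conv_def sum.Sigma)
  have M: "(\<Sum>(a,b)\<in>(SIGMA a:{..r}. {..r-a}). F a b (r-a-b)) = (\<Sum>(s,a)\<in>(SIGMA s:{..r}. {..s}). F a (s-a) (r-s))"
    by (rule sum.reindex_bij_witness[where i="\<lambda>(s,a). (a, s-a)" and j="\<lambda>(a,b). (a+b, a)"]) auto
  show ?thesis using L R M by simp
qed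

lemma conv_swap: "conv T r = conv (\<lambda>i j. T j i) r"
  unfolding conv_def
  by (rule sum.reindex_bij_witness[where i="\<lambda>i. r - i" and j="\<lambda>i. r - i"]) auto

lemma conv_comm3: "conv (\<lambda>k s. conv (\<lambda>j t. F k j t) s) r = conv (\<lambda>j s. conv (\<lambda>k t. F k j t) s) r"
proof -
  have "conv (\<lambda>k s. conv (\<lambda>j t. F k j t) s) r = conv (\<lambda>s c. conv (\<lambda>k j. F k j c) s) r"
    by (rule conv_assoc)
  also have "\<dots> = conv (\<lambda>s c. conv (\<lambda>j k. F k j c) s) r"
    by (rule conv_cong, rule conv_swap)
  also have "\<dots> = conv (\<lambda>j s. conv (\<lambda>k c. F k j c) s) r"
    by (rule conv_assoc[symmetric])
  finally show ?thesis .
qed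

lemma conv_cmult: fixes T :: "nat \<Rightarrow> nat \<Rightarrow> 'a::semiring_0" shows "conv (\<lambda>i j. c * T i j) r = c * conv T r"
  by (simp add: conv_def sum_distrib_left)

lemma conv_add: "conv (\<lambda>i j. T i j + U i j) r = conv T r + conv U r"
  by (simp add: conv_def sum.distrib)

lemma conv_cnj: fixes T :: "nat \<Rightarrow> nat \<Rightarrow> complex" shows "cnj (conv T r) = conv (\<lambda>i j. cnj (T i j)) r"
  by (simp add: conv_def)

lemma star_conv: "star Mr f g r x = conv (\<lambda>k s. conv (\<lambda>i l. Mr k (f i) (g l) x) s) r"
  by (simp add: star_def conv_def)

lemma smult_conv: "series_smult a f r x = conv (\<lambda>i j. fps_nth a i * f j x) r"
  by (simp add: series_smult_def conv_def)

definition fps_cnj :: "complex fps \<Rightarrow> complex fps" where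
  "fps_cnj a = Abs_fps (\<lambda>n. cnj (fps_nth a n))"

lemma fps_cnj_nth [simp]: "fps_nth (fps_cnj a) n = cnj (fps_nth a n)"
  by (simp add: fps_cnj_def)

definition esr :: "nat \<Rightarrow> ('m \<Rightarrow> complex) \<Rightarrow> 'm fseries" where
  "esr r u = (\<lambda>k x. if k = r then u x else 0)"



lemma tsupp_sum_sub:
  assumes "finite I"
  shows "tsupp (\<lambda>x. \<Sum>i\<in>I. F i x) \<subseteq> (\<Union>i\<in>I. tsupp (F i))"
proof -
  have "{x. (\<Sum>i\<in>I. F i x) \<noteq> 0} \<subseteq> (\<Union>i\<in>I. tsupp (F i))"
  proof
    fix x assume "x \<in> {x. (\<Sum>i\<in>I. F i x) \<noteq> 0}"
    then obtain i where "i \<in> I" "F i x \<noteq> 0" by (metis (mono_tags, lifting) mem_Collect_eq sum.neutral)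
    then show "x \<in> (\<Union>i\<in>I. tsupp (F i))" using tsupp_nz by blast
  qed
  moreover have "closed (\<Union>i\<in>I. tsupp (F i))"
    using assms by (intro closed_UN) (auto simp: closed_tsupp)
  ultimately show ?thesis unfolding tsupp_def[of "\<lambda>x. \<Sum>i\<in>I. F i x"] by (rule closure_minimal)
qed

lemma cs_sum:
  assumes "finite I" "\<And>i. i \<in> I \<Longrightarrow> compact (tsupp (F i)) \<and> tsupp (F i) \<subseteq> S"
  shows "compact (tsupp (\<lambda>x. \<Sum>i\<in>I. F i x)) \<and> tsupp (\<lambda>x. \<Sum>i\<in>I. F i x) \<subseteq> S"
proof
  have c: "compact (\<Union>i\<in>I. tsupp (F i))" using assms by (intro compact_UN) auto
  show "compact (tsupp (\<lambda>x. \<Sum>i\<in>I. F i x))"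
    by (rule compact_tsupp_sub[OF c tsupp_sum_sub[OF assms(1)]])
  show "tsupp (\<lambda>x. \<Sum>i\<in>I. F i x) \<subseteq> S" using tsupp_sum_sub[OF assms(1)] assms(2) by blast
qed

lemma tsupp_cnj: "tsupp (\<lambda>x. cnj (u x)) = tsupp u"
  unfolding tsupp_def by simp

lemma tsupp_cmult: "tsupp (\<lambda>x. c * u x) \<subseteq> tsupp u"
  by (rule tsupp_mono) simp

lemma C0_smooth: "f \<in> C0 A S \<Longrightarrow> smooth_fun A (f r)"
  unfolding C0_def smooth_series_def by blast

lemma C0_supp: "f \<in> C0 A S \<Longrightarrow> compact (tsupp (f r)) \<and> tsupp (f r) \<subseteq> S"
  unfolding C0_def by blast

lemma C0I: "(\<And>r. smooth_fun A (f r)) \<Longrightarrow> (\<And>r. compact (tsupp (f r)) \<and> tsupp (f r) \<subseteq> S) \<Longrightarrow> f \<in> C0 A S"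
  unfolding C0_def smooth_series_def by blast

lemma C0_mono: "f \<in> C0 A S \<Longrightarrow> S \<subseteq> T \<Longrightarrow> f \<in> C0 A T"
  unfolding C0_def by blast

lemma C0_zero: "(\<lambda>k x. 0) \<in> C0 A S"
  by (rule C0I) (simp_all add: smooth_fun_const tsupp_zero)

lemma C0_esr: "smooth_fun A u \<Longrightarrow> compact (tsupp u) \<Longrightarrow> tsupp u \<subseteq> S \<Longrightarrow> esr r u \<in> C0 A S"
proof (rule C0I)
  fix k
  assume a: "smooth_fun A u" "compact (tsupp u)" "tsupp u \<subseteq> S"
  show "smooth_fun A (esr r u k)" using a by (cases "k = r") (simp_all add: esr_def smooth_fun_const)
  show "compact (tsupp (esr r u k)) \<and> tsupp (esr r u k) \<subseteq> S"
    using a by (cases "k = r") (simp_all add: esr_def tsupp_zero)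
qed

lemma C0_cnj: "smooth_atlas A \<Longrightarrow> f \<in> C0 A S \<Longrightarrow> series_cnj f \<in> C0 A S"
  unfolding series_cnj_def
  by (rule C0I) (auto simp: tsupp_cnj intro: smooth_fun_cnj C0_smooth dest: C0_supp)

lemma C0_sum:
  assumes "smooth_atlas A" "finite I" "\<And>i. i \<in> I \<Longrightarrow> F i \<in> C0 A S"
  shows "(\<lambda>k x. \<Sum>i\<in>I. F i k x) \<in> C0 A S"
proof (rule C0I)
  fix r
  show "smooth_fun A (\<lambda>x. \<Sum>i\<in>I. F i r x)"
    using assms by (intro smooth_fun_sum) (auto intro: C0_smooth)
  show "compact (tsupp (\<lambda>x. \<Sum>i\<in>I. F i r x)) \<and> tsupp (\<lambda>x. \<Sum>i\<in>I. F i r x) \<subseteq> S"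
    using assms by (intro cs_sum) (auto dest: C0_supp)
qed

lemma C0_add: "smooth_atlas A \<Longrightarrow> f \<in> C0 A S \<Longrightarrow> g \<in> C0 A S \<Longrightarrow> series_add f g \<in> C0 A S"
  using C0_sum[of A "{True, False}" "\<lambda>b. if b then f else g" S]
  by (simp add: series_add_def)

lemma C0_smult:
  assumes "smooth_atlas A" "f \<in> C0 A S"
  shows "series_smult a f \<in> C0 A S"
proof (rule C0I)
  fix r
  show "smooth_fun A (series_smult a f r)"
    unfolding series_smult_def
    using assms by (intro smooth_fun_sum smooth_fun_cmult) (auto intro: C0_smooth)
  show "compact (tsupp (series_smult a f r)) \<and> tsupp (series_smult a f r) \<subseteq> S"
    unfolding series_smult_def
  proof (rule cs_sum)
    fix i
    have "compact (tsupp (f (r - i))) \<and> tsupp (f (r - i)) \<subseteq> S" using C0_supp[OF assms(2)] .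
    then show "compact (tsupp (\<lambda>x. fps_nth a i * f (r - i) x)) \<and> tsupp (\<lambda>x. fps_nth a i * f (r - i) x) \<subseteq> S"
      using tsupp_cmult compact_tsupp_sub by blast
  qed simp
qed



lemma cnj_add: "series_cnj (series_add f g) = series_add (series_cnj f) (series_cnj g)"
  by (simp add: series_cnj_def series_add_def)

lemma cnj_smult: "series_cnj (series_smult a f) = series_smult (fps_cnj a) (series_cnj f)"
  by (simp add: series_cnj_def series_smult_def)

lemma cnj_cnj: "series_cnj (series_cnj f) = f"
  by (simp add: series_cnj_def)

lemma C0_series: "f \<in> C0 A S \<Longrightarrow> smooth_series A f"
  unfolding C0_def by blast

context
  fixes A :: "('m::t2_space set \<times> ('m \<Rightarrow> real^'n)) set"
    and pb :: "('m \<Rightarrow> complex) \<Rightarrow> ('m \<Rightarrow> complex) \<Rightarrow> ('m \<Rightarrow> complex)"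
    and Mr :: "nat \<Rightarrow> ('m \<Rightarrow> complex) \<Rightarrow> ('m \<Rightarrow> complex) \<Rightarrow> ('m \<Rightarrow> complex)"
  assumes A: "smooth_atlas A" and SP: "star_product A pb Mr"
begin

lemmas SP1 = SP[unfolded star_product_def, THEN conjunct1, rule_format]
lemmas SP3 = SP[unfolded star_product_def, THEN conjunct2, THEN conjunct2, rule_format]

lemma Mr_smooth: "smooth_fun A f \<Longrightarrow> smooth_fun A g \<Longrightarrow> smooth_fun A (Mr k f g)"
  using SP1[of f g f k] by blast

lemma Mr_addL: "smooth_fun A f \<Longrightarrow> smooth_fun A g \<Longrightarrow> smooth_fun A h \<Longrightarrow>
    Mr k (\<lambda>x. f x + g x) h = (\<lambda>x. Mr k f h x + Mr k g h x)"
  using SP1[of f g h k] by blast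

lemma Mr_addR: "smooth_fun A f \<Longrightarrow> smooth_fun A g \<Longrightarrow> smooth_fun A h \<Longrightarrow>
    Mr k h (\<lambda>x. f x + g x) = (\<lambda>x. Mr k h f x + Mr k h g x)"
  using SP1[of f g h k] by blast

lemma Mr_scalL: "smooth_fun A f \<Longrightarrow> smooth_fun A g \<Longrightarrow> Mr k (\<lambda>x. c * f x) g = (\<lambda>x. c * Mr k f g x)"
  using SP1[of f g f k c] by blast

lemma Mr_scalR: "smooth_fun A f \<Longrightarrow> smooth_fun A g \<Longrightarrow> Mr k g (\<lambda>x. c * f x) = (\<lambda>x. c * Mr k g f x)"
  using SP1[of f g f k c] by blast

lemma Mr_tsupp: "smooth_fun A f \<Longrightarrow> smooth_fun A g \<Longrightarrow> tsupp (Mr k f g) \<subseteq> tsupp f \<inter> tsupp g"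
  using SP1[of f g f k] by blast

lemma Mr_cnj: "smooth_fun A f \<Longrightarrow> smooth_fun A g \<Longrightarrow> cnj (Mr k f g x) = Mr k (\<lambda>x. cnj (g x)) (\<lambda>x. cnj (f x)) x"
proof -
  assume "smooth_fun A f" "smooth_fun A g"
  then have "(\<lambda>x. cnj (Mr k f g x)) = Mr k (\<lambda>x. cnj (g x)) (\<lambda>x. cnj (f x))"
    using SP1[of f g f k] by blast
  then show ?thesis by (metis)
qed

lemma star_assoc: "smooth_series A f \<Longrightarrow> smooth_series A g \<Longrightarrow> smooth_series A h \<Longrightarrow>
    star Mr (star Mr f g) h = star Mr f (star Mr g h)"
  using SP3 by blast

lemma Mr_zeroL: "smooth_fun A v \<Longrightarrow> Mr k (\<lambda>x. 0) v = (\<lambda>x. 0)"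
  using Mr_scalL[of v v k 0] by simp

lemma Mr_zeroR: "smooth_fun A v \<Longrightarrow> Mr k v (\<lambda>x. 0) = (\<lambda>x. 0)"
  using Mr_scalR[of v v k 0] by simp

lemma Mr_sumL:
  assumes "finite J" "\<And>j. j \<in> J \<Longrightarrow> smooth_fun A (u j)" "smooth_fun A v"
  shows "Mr k (\<lambda>x. \<Sum>j\<in>J. c j * u j x) v = (\<lambda>x. \<Sum>j\<in>J. c j * Mr k (u j) v x)"
  using assms(1,2)
proof (induction J rule: finite_induct)
  case empty
  then show ?case using Mr_zeroL[OF assms(3)] by simp
next
  case (insert j J)
  have s1: "smooth_fun A (\<lambda>x. c j * u j x)" using insert by (intro smooth_fun_cmult[OF A]) auto
  have s2: "smooth_fun A (\<lambda>x. \<Sum>j\<in>J. c j * u j x)"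
    using insert by (intro smooth_fun_sum[OF A] smooth_fun_cmult[OF A]) auto
  have "Mr k (\<lambda>x. \<Sum>j\<in>insert j J. c j * u j x) v = Mr k (\<lambda>x. c j * u j x + (\<Sum>j\<in>J. c j * u j x)) v"
    using insert by simp
  also have "\<dots> = (\<lambda>x. Mr k (\<lambda>x. c j * u j x) v x + Mr k (\<lambda>x. \<Sum>j\<in>J. c j * u j x) v x)"
    by (rule Mr_addL[OF s1 s2 assms(3)])
  also have "\<dots> = (\<lambda>x. c j * Mr k (u j) v x + (\<Sum>j\<in>J. c j * Mr k (u j) v x))"
    using insert Mr_scalL[of "u j" v k "c j"] assms(3) by simp
  finally show ?case using insert by simp
qed

lemma Mr_sumR:
  assumes "finite J" "\<And>j. j \<in> J \<Longrightarrow> smooth_fun A (u j)" "smooth_fun A v"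
  shows "Mr k v (\<lambda>x. \<Sum>j\<in>J. c j * u j x) = (\<lambda>x. \<Sum>j\<in>J. c j * Mr k v (u j) x)"
  using assms(1,2)
proof (induction J rule: finite_induct)
  case empty
  then show ?case using Mr_zeroR[OF assms(3)] by simp
next
  case (insert j J)
  have s1: "smooth_fun A (\<lambda>x. c j * u j x)" using insert by (intro smooth_fun_cmult[OF A]) auto
  have s2: "smooth_fun A (\<lambda>x. \<Sum>j\<in>J. c j * u j x)"
    using insert by (intro smooth_fun_sum[OF A] smooth_fun_cmult[OF A]) auto
  have "Mr k v (\<lambda>x. \<Sum>j\<in>insert j J. c j * u j x) = Mr k v (\<lambda>x. c j * u j x + (\<Sum>j\<in>J. c j * u j x))"
    using insert by simp
  also have "\<dots> = (\<lambda>x. Mr k v (\<lambda>x. c j * u j x) x + Mr k v (\<lambda>x. \<Sum>j\<in>J. c j * u j x) x)"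
    by (rule Mr_addR[OF s1 s2 assms(3)])
  also have "\<dots> = (\<lambda>x. c j * Mr k v (u j) x + (\<Sum>j\<in>J. c j * Mr k v (u j) x))"
    using insert Mr_scalR[of "u j" v k "c j"] assms(3) by simp
  finally show ?case using insert by simp
qed

lemma star_coeff: "star Mr f g r = (\<lambda>x. \<Sum>k\<le>r. (\<lambda>x. \<Sum>i\<le>r - k. Mr k (f i) (g (r - k - i)) x) x)"
  by (simp add: star_def)

lemma smooth_star: "smooth_series A f \<Longrightarrow> smooth_series A g \<Longrightarrow> smooth_fun A (star Mr f g r)"
  unfolding star_coeff smooth_series_def
  by (intro smooth_fun_sum[OF A] Mr_smooth) auto

lemma C0_starR:
  assumes f: "f \<in> C0 A S" and g: "smooth_series A g"
  shows "star Mr f g \<in> C0 A S"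
proof (rule C0I)
  fix r
  show "smooth_fun A (star Mr f g r)"
    using f g by (intro smooth_star) (auto simp: smooth_series_def intro: C0_smooth)
  show "compact (tsupp (star Mr f g r)) \<and> tsupp (star Mr f g r) \<subseteq> S"
    unfolding star_coeff
  proof (rule cs_sum[OF finite_atMost])
    fix k
    show "compact (tsupp (\<lambda>x. \<Sum>i\<le>r - k. Mr k (f i) (g (r - k - i)) x)) \<and>
          tsupp (\<lambda>x. \<Sum>i\<le>r - k. Mr k (f i) (g (r - k - i)) x) \<subseteq> S"
    proof (rule cs_sum[OF finite_atMost])
      fix i
      have sm: "smooth_fun A (f i)" "smooth_fun A (g (r - k - i))"
        using f g by (auto simp: smooth_series_def intro: C0_smooth)
      have "tsupp (Mr k (f i) (g (r - k - i))) \<subseteq> tsupp (f i)" using Mr_tsupp[OF sm] by blast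
      then show "compact (tsupp (\<lambda>x. Mr k (f i) (g (r - k - i)) x)) \<and> tsupp (\<lambda>x. Mr k (f i) (g (r - k - i)) x) \<subseteq> S"
        using C0_supp[OF f, of i] compact_tsupp_sub by (metis (no_types, lifting) subset_trans eta_contract_eq)
    qed
  qed
qed

lemma C0_starL:
  assumes f: "smooth_series A f" and g: "g \<in> C0 A S"
  shows "star Mr f g \<in> C0 A S"
proof (rule C0I)
  fix r
  show "smooth_fun A (star Mr f g r)"
    using f g by (intro smooth_star) (auto simp: smooth_series_def intro: C0_smooth)
  show "compact (tsupp (star Mr f g r)) \<and> tsupp (star Mr f g r) \<subseteq> S"
    unfolding star_coeff
  proof (rule cs_sum[OF finite_atMost])
    fix k
    show "compact (tsupp (\<lambda>x. \<Sum>i\<le>r - k. Mr k (f i) (g (r - k - i)) x)) \<and>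
          tsupp (\<lambda>x. \<Sum>i\<le>r - k. Mr k (f i) (g (r - k - i)) x) \<subseteq> S"
    proof (rule cs_sum[OF finite_atMost])
      fix i
      have sm: "smooth_fun A (f i)" "smooth_fun A (g (r - k - i))"
        using f g by (auto simp: smooth_series_def intro: C0_smooth)
      have "tsupp (Mr k (f i) (g (r - k - i))) \<subseteq> tsupp (g (r - k - i))" using Mr_tsupp[OF sm] by blast
      then show "compact (tsupp (\<lambda>x. Mr k (f i) (g (r - k - i)) x)) \<and> tsupp (\<lambda>x. Mr k (f i) (g (r - k - i)) x) \<subseteq> S"
        using C0_supp[OF g, of "r - k - i"] compact_tsupp_sub by (metis (no_types, lifting) subset_trans eta_contract_eq)
    qed
  qed
qed


lemma star_addL:
  assumes "smooth_series A f" "smooth_series A g" "smooth_series A h"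
  shows "star Mr (series_add f g) h = series_add (star Mr f h) (star Mr g h)"
  using assms unfolding smooth_series_def star_def series_add_def
  by (simp add: Mr_addL sum.distrib)

lemma star_addR:
  assumes "smooth_series A f" "smooth_series A g" "smooth_series A h"
  shows "star Mr h (series_add f g) = series_add (star Mr h f) (star Mr h g)"
  using assms unfolding smooth_series_def star_def series_add_def
  by (simp add: Mr_addR sum.distrib)

lemma star_smultL:
  assumes f: "smooth_series A f" and g: "smooth_series A g"
  shows "star Mr (series_smult a f) g = series_smult a (star Mr f g)"
proof (intro ext)
  fix r x
  have 1: "Mr k (series_smult a f i) (g l) x = conv (\<lambda>j m. fps_nth a j * Mr k (f m) (g l) x) i" for k i l
  proof -
    have "Mr k (series_smult a f i) (g l) = (\<lambda>x. \<Sum>j\<le>i. fps_nth a j * Mr k (f (i - j)) (g l) x)"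
      unfolding series_smult_def
      using Mr_sumL[of "{..i}" "\<lambda>j. f (i - j)" "g l" k "\<lambda>j. fps_nth a j"] f g by (simp add: smooth_series_def)
    then show ?thesis by (simp add: conv_def)
  qed
  have "star Mr (series_smult a f) g r x = conv (\<lambda>k s. conv (\<lambda>i l. conv (\<lambda>j m. fps_nth a j * Mr k (f m) (g l) x) i) s) r"
    by (simp only: star_conv 1)
  also have "\<dots> = conv (\<lambda>k s. conv (\<lambda>j t. conv (\<lambda>m l. fps_nth a j * Mr k (f m) (g l) x) t) s) r"
    by (rule conv_cong, rule conv_assoc[symmetric])
  also have "\<dots> = conv (\<lambda>k s. conv (\<lambda>j t. fps_nth a j * conv (\<lambda>m l. Mr k (f m) (g l) x) t) s) r"
    by (simp only: conv_cmult)
  also have "\<dots> = conv (\<lambda>j s. conv (\<lambda>k t. fps_nth a j * conv (\<lambda>m l. Mr k (f m) (g l) x) t) s) r"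
    by (rule conv_comm3)
  also have "\<dots> = conv (\<lambda>j s. fps_nth a j * conv (\<lambda>k t. conv (\<lambda>m l. Mr k (f m) (g l) x) t) s) r"
    by (simp only: conv_cmult)
  also have "\<dots> = series_smult a (star Mr f g) r x"
    by (simp only: smult_conv star_conv)
  finally show "star Mr (series_smult a f) g r x = series_smult a (star Mr f g) r x" .
qed

lemma star_smultR:
  assumes f: "smooth_series A f" and g: "smooth_series A g"
  shows "star Mr f (series_smult a g) = series_smult a (star Mr f g)"
proof (intro ext)
  fix r x
  have 1: "Mr k (f i) (series_smult a g l) x = conv (\<lambda>j m. fps_nth a j * Mr k (f i) (g m) x) l" for k i l
  proof -
    have "Mr k (f i) (series_smult a g l) = (\<lambda>x. \<Sum>j\<le>l. fps_nth a j * Mr k (f i) (g (l - j)) x)"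
      unfolding series_smult_def
      using Mr_sumR[of "{..l}" "\<lambda>j. g (l - j)" "f i" k "\<lambda>j. fps_nth a j"] f g by (simp add: smooth_series_def)
    then show ?thesis by (simp add: conv_def)
  qed
  have "star Mr f (series_smult a g) r x = conv (\<lambda>k s. conv (\<lambda>i l. conv (\<lambda>j m. fps_nth a j * Mr k (f i) (g m) x) l) s) r"
    by (simp only: star_conv 1)
  also have "\<dots> = conv (\<lambda>k s. conv (\<lambda>j t. conv (\<lambda>i m. fps_nth a j * Mr k (f i) (g m) x) t) s) r"
    by (rule conv_cong, rule conv_comm3)
  also have "\<dots> = conv (\<lambda>k s. conv (\<lambda>j t. fps_nth a j * conv (\<lambda>i m. Mr k (f i) (g m) x) t) s) r"
    by (simp only: conv_cmult)
  also have "\<dots> = conv (\<lambda>j s. conv (\<lambda>k t. fps_nth a j * conv (\<lambda>i m. Mr k (f i) (g m) x) t) s) r"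
    by (rule conv_comm3)
  also have "\<dots> = conv (\<lambda>j s. fps_nth a j * conv (\<lambda>k t. conv (\<lambda>i m. Mr k (f i) (g m) x) t) s) r"
    by (simp only: conv_cmult)
  also have "\<dots> = series_smult a (star Mr f g) r x"
    by (simp only: smult_conv star_conv)
  finally show "star Mr f (series_smult a g) r x = series_smult a (star Mr f g) r x" .
qed

lemma cnj_star:
  assumes f: "smooth_series A f" and g: "smooth_series A g"
  shows "series_cnj (star Mr f g) = star Mr (series_cnj g) (series_cnj f)"
proof (intro ext)
  fix r x
  have "series_cnj (star Mr f g) r x = conv (\<lambda>k s. conv (\<lambda>i l. cnj (Mr k (f i) (g l) x)) s) r"
    by (simp only: series_cnj_def star_conv conv_cnj)
  also have "\<dots> = conv (\<lambda>k s. conv (\<lambda>i l. Mr k (series_cnj g l) (series_cnj f i) x) s) r"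
    using f g by (simp add: Mr_cnj series_cnj_def smooth_series_def)
  also have "\<dots> = conv (\<lambda>k s. conv (\<lambda>l i. Mr k (series_cnj g l) (series_cnj f i) x) s) r"
    by (rule conv_cong, rule conv_swap)
  also have "\<dots> = star Mr (series_cnj g) (series_cnj f) r x"
    by (simp only: star_conv)
  finally show "series_cnj (star Mr f g) r x = star Mr (series_cnj g) (series_cnj f) r x" .
qed

end



lemma func_supp_sub:
  assumes "open S" "\<forall>g\<in>C0 A S. \<psi> g = 0"
  shows "func_supp A \<psi> \<subseteq> - S"
  using assms unfolding func_supp_def by blast

lemma func_supp_mono:
  assumes "\<And>S. open S \<Longrightarrow> \<forall>g\<in>C0 A S. \<phi> g = 0 \<Longrightarrow> \<forall>g\<in>C0 A S. \<psi> g = 0"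
  shows "func_supp A \<psi> \<subseteq> func_supp A \<phi>"
  using assms unfolding func_supp_def by blast

lemma func_supp_union:
  assumes "\<And>S. open S \<Longrightarrow> \<forall>g\<in>C0 A S. \<phi>1 g = 0 \<Longrightarrow> \<forall>g\<in>C0 A S. \<phi>2 g = 0 \<Longrightarrow> \<forall>g\<in>C0 A S. \<psi> g = 0"
  shows "func_supp A \<psi> \<subseteq> func_supp A \<phi>1 \<union> func_supp A \<phi>2"
proof
  fix x assume x: "x \<in> func_supp A \<psi>"
  show "x \<in> func_supp A \<phi>1 \<union> func_supp A \<phi>2"
  proof (rule ccontr)
    assume "x \<notin> func_supp A \<phi>1 \<union> func_supp A \<phi>2"
    then obtain S1 S2 where S: "open S1" "x \<in> S1" "\<forall>g\<in>C0 A S1. \<phi>1 g = 0" "open S2" "x \<in> S2" "\<forall>g\<in>C0 A S2. \<phi>2 g = 0"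
      unfolding func_supp_def by blast
    have "\<forall>g\<in>C0 A (S1 \<inter> S2). \<phi>1 g = 0" "\<forall>g\<in>C0 A (S1 \<inter> S2). \<phi>2 g = 0"
      using S(3,6) C0_mono[of _ A "S1 \<inter> S2"] by blast+
    then have "\<forall>g\<in>C0 A (S1 \<inter> S2). \<psi> g = 0" using assms S by blast
    then show False using x S unfolding func_supp_def by blast
  qed
qed

context
  fixes A :: "('m::t2_space set \<times> ('m \<Rightarrow> real^'n)) set"
    and \<omega> :: "'m fseries \<Rightarrow> complex fps"
  assumes A: "smooth_atlas A" and lin: "lin_functional A \<omega>"
begin

lemma om_add: "f \<in> C0 A UNIV \<Longrightarrow> g \<in> C0 A UNIV \<Longrightarrow> \<omega> (series_add f g) = \<omega> f + \<omega> g"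
  using lin unfolding lin_functional_def by blast

lemma om_smult: "f \<in> C0 A UNIV \<Longrightarrow> \<omega> (series_smult a f) = a * \<omega> f"
  using lin unfolding lin_functional_def by blast

lemma om_zero: "\<omega> (\<lambda>k x. 0) = 0"
proof -
  have "series_add (\<lambda>k x. 0) (\<lambda>k x. 0) = (\<lambda>k (x::'m). 0::complex)" by (simp add: series_add_def)
  then have "\<omega> (\<lambda>k x. 0) = \<omega> (\<lambda>k x. 0) + \<omega> (\<lambda>k x. 0)"
    using om_add[OF C0_zero C0_zero] by metis
  then show ?thesis by (metis add_cancel_right_right)
qed

lemma om_sum:
  assumes "finite I" "\<And>i. i \<in> I \<Longrightarrow> F i \<in> C0 A UNIV"
  shows "\<omega> (\<lambda>k x. \<Sum>i\<in>I. F i k x) = (\<Sum>i\<in>I. \<omega> (F i))"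
  using assms
proof (induction I rule: finite_induct)
  case empty
  then show ?case using om_zero by simp
next
  case (insert i I)
  have "(\<lambda>k x. \<Sum>i\<in>insert i I. F i k x) = series_add (F i) (\<lambda>k x. \<Sum>i\<in>I. F i k x)"
    using insert by (simp add: series_add_def)
  moreover have "(\<lambda>k x. \<Sum>i\<in>I. F i k x) \<in> C0 A UNIV"
    using insert by (intro C0_sum[OF A]) auto
  ultimately show ?case using insert om_add by simp
qed

lemma om_esr:
  assumes u: "smooth_fun A u" and cu: "compact (tsupp u)" and su: "tsupp u \<subseteq> - func_supp A \<omega>"
  shows "\<omega> (esr r u) = 0"
proof -
  have cov: "\<exists>S. open S \<and> x \<in> S \<and> (\<forall>f\<in>C0 A S. \<omega> f = 0)" if "x \<in> tsupp u" for x
    using su that unfolding func_supp_def by blast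
  obtain D :: "'m set" and pc SS where D: "finite D"
    "\<forall>d\<in>D. smooth_fun A (pc d) \<and> compact (tsupp (pc d)) \<and> (\<forall>f\<in>C0 A (SS d). \<omega> f = 0) \<and> tsupp (pc d) \<subseteq> SS d"
    "\<forall>y. u y = (\<Sum>d\<in>D. pc d y)"
    using split_fun[OF A u cu, of "\<lambda>S. \<forall>f\<in>C0 A S. \<omega> f = 0", OF cov] by blast
  have eq: "esr r u = (\<lambda>k x. \<Sum>d\<in>D. esr r (pc d) k x)"
    using D(3) by (auto simp: esr_def fun_eq_iff)
  have "\<omega> (esr r u) = (\<Sum>d\<in>D. \<omega> (esr r (pc d)))"
    unfolding eq using D(1,2) by (intro om_sum) (auto intro: C0_esr)
  also have "\<dots> = 0"
    using D(2) C0_esr by (intro sum.neutral) blast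
  finally show ?thesis .
qed

lemma vanish:
  assumes h: "h \<in> C0 A UNIV" and sh: "\<And>r. tsupp (h r) \<subseteq> - func_supp A \<omega>"
  shows "\<omega> h = 0"
proof (rule fps_ext)
  fix N
  define tr where "tr = (\<lambda>k x. \<Sum>r\<in>{..N}. esr r (h r) k x)"
  define sh where "sh = (\<lambda>k. h (k + Suc N))"
  have trC: "tr \<in> C0 A UNIV" unfolding tr_def
    using h by (intro C0_sum[OF A]) (auto intro!: C0_esr dest: C0_supp intro: C0_smooth)
  have shC: "sh \<in> C0 A UNIV" unfolding sh_def using h unfolding C0_def smooth_series_def by blast
  have tailC: "series_smult (fps_X ^ Suc N) sh \<in> C0 A UNIV" by (rule C0_smult[OF A shC])
  have hs: "h = series_add tr (series_smult (fps_X ^ Suc N) sh)"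
  proof (intro ext)
    fix k x
    have t: "tr k x = (if k \<le> N then h k x else 0)"
      unfolding tr_def esr_def by (simp add: sum.delta)
    have s: "series_smult (fps_X ^ Suc N) sh k x = (if Suc N \<le> k then h k x else 0)"
    proof -
      have "series_smult (fps_X ^ Suc N) sh k x = (\<Sum>i\<le>k. (if i = Suc N then 1 else 0) * sh (k - i) x)"
        by (simp only: series_smult_def fps_X_power_nth)
      also have "\<dots> = (\<Sum>i\<le>k. (if i = Suc N then sh (k - i) x else 0))"
        by (rule sum.cong) simp_all
      also have "\<dots> = (if Suc N \<le> k then sh (k - Suc N) x else 0)"
        by (subst sum.delta) simp_all
      finally show ?thesis unfolding sh_def by simp
    qed
    show "h k x = series_add tr (series_smult (fps_X ^ Suc N) sh) k x"
      unfolding series_add_def t s by simp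
  qed
  have "\<omega> tr = (\<Sum>r\<in>{..N}. \<omega> (esr r (h r)))"
    unfolding tr_def using h by (intro om_sum) (auto intro!: C0_esr dest: C0_supp intro: C0_smooth)
  also have "\<dots> = 0"
    using h sh by (intro sum.neutral ballI om_esr) (auto dest: C0_supp intro: C0_smooth)
  finally have tr0: "\<omega> tr = 0" .
  have "\<omega> h = \<omega> tr + fps_X ^ Suc N * \<omega> sh"
    using hs om_add[OF trC tailC] om_smult[OF shC] by simp
  then have "fps_nth (\<omega> h) N = fps_nth (fps_X ^ Suc N * \<omega> sh) N" using tr0 by simp
  also have "\<dots> = 0" by (simp only: fps_X_power_mult_nth) simp
  finally show "fps_nth (\<omega> h) N = fps_nth 0 N" by simp
qed

end



lemma fps_cnj_monom: "fps_cnj (fps_const t * fps_X ^ p) = fps_const (cnj t) * fps_X ^ p"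
  by (rule fps_ext) (simp add: fps_cnj_def)

lemma fps_lead_contra:
  fixes c c' d :: "complex fps"
  assumes nn: "\<And>t p. fps_nonneg (fps_const t * fps_X ^ p * c + fps_const (cnj t) * fps_X ^ p * c'
                 + fps_const (cnj t) * fps_X ^ p * (fps_const t * fps_X ^ p * d))"
  shows "c = 0"
proof -
  define e where "e t m = t * fps_nth c m + cnj t * fps_nth c' m" for t m
  define E where "E t p = fps_const t * fps_X ^ p * c + fps_const (cnj t) * fps_X ^ p * c'
                 + fps_const (cnj t) * fps_X ^ p * (fps_const t * fps_X ^ p * d)" for t p
  have En: "fps_nth (E t p) n = (if n < p then 0 else e t (n - p)) +
      (if n < p then 0 else if n - p < p then 0 else cnj t * (t * fps_nth d (n - p - p)))" for t p n
    unfolding E_def e_def by (simp add: mult.assoc fps_X_power_mult_nth)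
  have all0: "e t m = 0" for t m
  proof (rule ccontr)
    assume nz: "e t m \<noteq> 0"
    define q where "q = (LEAST m. e t m \<noteq> 0)"
    have eq: "e t q \<noteq> 0" unfolding q_def using nz by (rule LeastI)
    have lq: "e t m' = 0" if "m' < q" for m' using that unfolding q_def using not_less_Least by blast
    have pos: "0 < Re (e \<tau> q)" if \<tau>: "\<tau> = t \<or> \<tau> = - t" for \<tau>
    proof -
      have em: "e \<tau> m' = (if \<tau> = t then e t m' else - e t m')" for m'
        using \<tau> unfolding e_def by auto
      define p where "p = Suc q"
      have z: "fps_nth (E \<tau> p) n = 0" if "n < p + q" for n
        using that lq[of "n - p"] unfolding En em p_def by auto
      have l: "fps_nth (E \<tau> p) (p + q) = e \<tau> q"
        unfolding En p_def by simp
      have lnz: "fps_nth (E \<tau> p) (p + q) \<noteq> 0" using l em eq by auto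
      have sd: "subdegree (E \<tau> p) = p + q" by (rule subdegreeI[OF lnz z])
      have "E \<tau> p \<noteq> 0" using lnz by auto
      then have "0 < Re (fps_nth (E \<tau> p) (subdegree (E \<tau> p)))"
        using nn[of \<tau> p] unfolding E_def fps_nonneg_def by blast
      then show ?thesis using sd l by simp
    qed
    have "0 < Re (e t q)" using pos by blast
    moreover have "0 < Re (e (- t) q)" using pos by blast
    moreover have "e (- t) q = - e t q" unfolding e_def by simp
    ultimately show False by simp
  qed
  show "c = 0"
  proof (rule fps_ext)
    fix m
    have "e 1 m = 0" "e \<i> m = 0" using all0 by blast+
    then have "fps_nth c m + fps_nth c' m = 0" "\<i> * fps_nth c m - \<i> * fps_nth c' m = 0"
      unfolding e_def by simp_all
    then have "fps_nth c' m = - fps_nth c m" "\<i> * (fps_nth c m - fps_nth c' m) = 0"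
      by (simp_all add: eq_neg_iff_add_eq_0 add.commute right_diff_distrib)
    then have "\<i> * (2 * fps_nth c m) = 0" by simp
    then have "fps_nth c m = 0" by simp
    then show "fps_nth c m = fps_nth 0 m" by simp
  qed
qed



context
  fixes A :: "('m::t2_space set \<times> ('m \<Rightarrow> real^'n)) set"
    and pb :: "('m \<Rightarrow> complex) \<Rightarrow> ('m \<Rightarrow> complex) \<Rightarrow> ('m \<Rightarrow> complex)"
    and Mr :: "nat \<Rightarrow> ('m \<Rightarrow> complex) \<Rightarrow> ('m \<Rightarrow> complex) \<Rightarrow> ('m \<Rightarrow> complex)"
    and \<omega> :: "'m fseries \<Rightarrow> complex fps"
  assumes A: "smooth_atlas A" and SP: "star_product A pb Mr" and pos: "positive_functional A Mr \<omega>"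
begin

lemma lin: "lin_functional A \<omega>"
  using pos unfolding positive_functional_def by blast

lemma posf: "f \<in> C0 A UNIV \<Longrightarrow> fps_nonneg (\<omega> (star Mr (series_cnj f) f))"
  using pos unfolding positive_functional_def by blast

lemma key_expand:
  assumes a: "a \<in> C0 A UNIV" and b: "b \<in> C0 A UNIV"
  shows "\<omega> (star Mr (series_cnj (series_add a (series_smult s b))) (series_add a (series_smult s b))) =
    \<omega> (star Mr (series_cnj a) a) + s * \<omega> (star Mr (series_cnj a) b) + fps_cnj s * \<omega> (star Mr (series_cnj b) a)
    + fps_cnj s * (s * \<omega> (star Mr (series_cnj b) b))"
proof -
  let ?ca = "series_cnj a" and ?cb = "series_cnj b"
  let ?z = "series_smult s b" and ?cz = "series_smult (fps_cnj s) (series_cnj b)"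
  have caC: "?ca \<in> C0 A UNIV" and cbC: "?cb \<in> C0 A UNIV" using C0_cnj[OF A] a b by blast+
  have zC: "?z \<in> C0 A UNIV" and czC: "?cz \<in> C0 A UNIV" using C0_smult[OF A] b cbC by blast+
  have sa: "smooth_series A a" "smooth_series A b" "smooth_series A ?ca" "smooth_series A ?cb"
    "smooth_series A ?z" "smooth_series A ?cz"
    using a b caC cbC zC czC by (auto intro: C0_series)
  have cw: "series_cnj (series_add a ?z) = series_add ?ca ?cz"
    by (simp add: cnj_add cnj_smult)
  have st: "star Mr (series_add ?ca ?cz) (series_add a ?z) =
      series_add (series_add (star Mr ?ca a) (series_smult s (star Mr ?ca b)))
                 (series_add (series_smult (fps_cnj s) (star Mr ?cb a))
                             (series_smult (fps_cnj s) (series_smult s (star Mr ?cb b))))"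
  proof -
    have azC: "series_add a ?z \<in> C0 A UNIV" using C0_add[OF A a zC] .
    have saz: "smooth_series A (series_add a ?z)" using C0_series[OF azC] .
    have e1: "star Mr (series_add ?ca ?cz) (series_add a ?z) = series_add (star Mr ?ca (series_add a ?z)) (star Mr ?cz (series_add a ?z))"
      by (rule star_addL[OF A SP sa(3) sa(6) saz])
    have e2: "star Mr ?ca (series_add a ?z) = series_add (star Mr ?ca a) (star Mr ?ca ?z)"
      by (rule star_addR[OF A SP sa(1) sa(5) sa(3)])
    have e3: "star Mr ?cz (series_add a ?z) = series_add (star Mr ?cz a) (star Mr ?cz ?z)"
      by (rule star_addR[OF A SP sa(1) sa(5) sa(6)])
    have e4: "star Mr ?ca ?z = series_smult s (star Mr ?ca b)"
      by (rule star_smultR[OF A SP sa(3) sa(2)])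
    have e5: "star Mr ?cz a = series_smult (fps_cnj s) (star Mr ?cb a)"
      by (rule star_smultL[OF A SP sa(4) sa(1)])
    have e6: "star Mr ?cz ?z = series_smult (fps_cnj s) (star Mr ?cb ?z)"
      by (rule star_smultL[OF A SP sa(4) sa(5)])
    have e7: "star Mr ?cb ?z = series_smult s (star Mr ?cb b)"
      by (rule star_smultR[OF A SP sa(4) sa(2)])
    show ?thesis unfolding e1 e2 e3 e4 e5 e6 e7 ..
  qed
  have m1: "star Mr ?ca a \<in> C0 A UNIV" "star Mr ?ca b \<in> C0 A UNIV" "star Mr ?cb a \<in> C0 A UNIV" "star Mr ?cb b \<in> C0 A UNIV"
    using C0_starR[OF A SP] caC cbC sa by blast+
  have m2: "series_smult s (star Mr ?ca b) \<in> C0 A UNIV" "series_smult (fps_cnj s) (star Mr ?cb a) \<in> C0 A UNIV"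
     "series_smult s (star Mr ?cb b) \<in> C0 A UNIV"
     "series_smult (fps_cnj s) (series_smult s (star Mr ?cb b)) \<in> C0 A UNIV"
    using C0_smult[OF A] m1 by blast+
  show ?thesis
    unfolding cw st
    using m1 m2 C0_add[OF A]
    by (simp add: om_add[OF A lin] om_smult[OF A lin] add.assoc)
qed

lemma cs_zero:
  assumes a: "a \<in> C0 A UNIV" and b: "b \<in> C0 A UNIV" and aa: "\<omega> (star Mr (series_cnj a) a) = 0"
  shows "\<omega> (star Mr (series_cnj a) b) = 0"
proof (rule fps_lead_contra)
  fix t p
  let ?s = "fps_const (t::complex) * fps_X ^ p"
  have "series_add a (series_smult ?s b) \<in> C0 A UNIV" using C0_add[OF A] C0_smult[OF A] a b by blast
  from posf[OF this] show "fps_nonneg (fps_const t * fps_X ^ p * \<omega> (star Mr (series_cnj a) b) +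
      fps_const (cnj t) * fps_X ^ p * \<omega> (star Mr (series_cnj b) a) +
      fps_const (cnj t) * fps_X ^ p * (fps_const t * fps_X ^ p * \<omega> (star Mr (series_cnj b) b)))"
    unfolding key_expand[OF a b] aa fps_cnj_monom by simp
qed


lemma star_disjoint:
  assumes u: "smooth_series A u" and v: "smooth_series A v" and dj: "\<And>i l. tsupp (u i) \<inter> tsupp (v l) = {}"
  shows "star Mr u v = (\<lambda>k x. 0)"
proof (intro ext)
  fix r x
  have "Mr k (u i) (v l) x = 0" for k i l
  proof -
    have "tsupp (Mr k (u i) (v l)) = {}"
      using Mr_tsupp[OF A SP, of "u i" "v l" k] u v dj[of i l] unfolding smooth_series_def by blast
    then show ?thesis using notin_tsupp by blast
  qed
  then show "star Mr u v r x = 0" unfolding star_def by simp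
qed

lemma C0_cnj_series: "f \<in> C0 A S \<Longrightarrow> smooth_series A (series_cnj f)"
  using C0_series C0_cnj[OF A] by blast

lemma f_in_ssupp: "f \<in> C0 A UNIV \<Longrightarrow> f \<in> C0 A (ssupp f)"
proof (rule C0I)
  fix r assume f: "f \<in> C0 A UNIV"
  show "smooth_fun A (f r)" by (rule C0_smooth[OF f])
  have "tsupp (f r) \<subseteq> (\<Union>r. tsupp (f r))" by blast
  also have "\<dots> \<subseteq> ssupp f" unfolding ssupp_def by (rule closure_subset)
  finally show "compact (tsupp (f r)) \<and> tsupp (f r) \<subseteq> ssupp f" using C0_supp[OF f] by blast
qed

lemma part_i:
  assumes f: "f \<in> C0 A UNIV" and dj: "ssupp f \<inter> func_supp A \<omega> = {}"
  shows "f \<in> gelfand_ideal A Mr \<omega>"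
proof -
  have hS: "star Mr (series_cnj f) f \<in> C0 A (ssupp f)"
    by (rule C0_starL[OF A SP C0_cnj_series[OF f] f_in_ssupp[OF f]])
  have "\<omega> (star Mr (series_cnj f) f) = 0"
  proof (rule vanish[OF A lin])
    show "star Mr (series_cnj f) f \<in> C0 A UNIV" using C0_mono[OF hS] by blast
    fix r show "tsupp (star Mr (series_cnj f) f r) \<subseteq> - func_supp A \<omega>"
      using C0_supp[OF hS, of r] dj by blast
  qed
  then show ?thesis unfolding gelfand_ideal_def using f by blast
qed

lemma part_iia:
  assumes f: "f \<in> C0 A UNIV"
  shows "func_supp A (vec_functional Mr \<omega> f) \<subseteq> ssupp f"
proof -
  have o: "open (- ssupp f)" unfolding ssupp_def by (intro open_Compl closed_closure)
  have "\<forall>g\<in>C0 A (- ssupp f). vec_functional Mr \<omega> f g = 0"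
  proof
    fix g assume g: "g \<in> C0 A (- ssupp f)"
    have fs: "tsupp (f i) \<subseteq> ssupp f" for i using f_in_ssupp[OF f] C0_supp by blast
    have inner: "star Mr (series_cnj f) g = (\<lambda>k x. 0)"
    proof (rule star_disjoint)
      show "smooth_series A (series_cnj f)" by (rule C0_cnj_series[OF f])
      show "smooth_series A g" by (rule C0_series[OF g])
      fix i l show "tsupp (series_cnj f i) \<inter> tsupp (g l) = {}"
        using fs[of i] C0_supp[OF g, of l] tsupp_cnj[of "f i"] unfolding series_cnj_def by auto
    qed
    have outer: "star Mr (\<lambda>k x. 0) f = (\<lambda>k x. 0)"
      by (rule star_disjoint) (auto simp: smooth_series_def smooth_fun_const tsupp_zero intro: C0_smooth[OF f])
    show "vec_functional Mr \<omega> f g = 0"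
      unfolding vec_functional_def inner outer by (rule om_zero[OF A lin])
  qed
  then show ?thesis using func_supp_sub[OF o] by blast
qed

lemma part_iib:
  assumes f: "f \<in> C0 A UNIV"
  shows "func_supp A (vec_functional Mr \<omega> f) \<subseteq> func_supp A \<omega>"
proof (rule func_supp_mono)
  fix S :: "'m set" assume "open S" and van: "\<forall>g\<in>C0 A S. \<omega> g = 0"
  show "\<forall>g\<in>C0 A S. vec_functional Mr \<omega> f g = 0"
  proof
    fix g assume g: "g \<in> C0 A S"
    have "star Mr (series_cnj f) g \<in> C0 A S" by (rule C0_starL[OF A SP C0_cnj_series[OF f] g])
    then have "star Mr (star Mr (series_cnj f) g) f \<in> C0 A S"
      by (rule C0_starR[OF A SP _ C0_series[OF f]])
    then show "vec_functional Mr \<omega> f g = 0" unfolding vec_functional_def using van by blast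
  qed
qed

lemma part_smult:
  assumes f: "f \<in> C0 A UNIV"
  shows "func_supp A (vec_functional Mr \<omega> (series_smult \<alpha> f)) \<subseteq> func_supp A (vec_functional Mr \<omega> f)"
proof (rule func_supp_mono)
  fix S :: "'m set" assume "open S" and van: "\<forall>g\<in>C0 A S. vec_functional Mr \<omega> f g = 0"
  show "\<forall>g\<in>C0 A S. vec_functional Mr \<omega> (series_smult \<alpha> f) g = 0"
  proof
    fix g assume g: "g \<in> C0 A S"
    have cf: "smooth_series A (series_cnj f)" by (rule C0_cnj_series[OF f])
    have sf: "smooth_series A f" by (rule C0_series[OF f])
    have gU: "g \<in> C0 A UNIV" using C0_mono[OF g] by blast
    have YC: "star Mr (series_cnj f) g \<in> C0 A UNIV" by (rule C0_starL[OF A SP cf gU])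
    have sY: "smooth_series A (star Mr (series_cnj f) g)" by (rule C0_series[OF YC])
    have ZC: "star Mr (star Mr (series_cnj f) g) f \<in> C0 A UNIV" by (rule C0_starR[OF A SP YC sf])
    have ZC2: "series_smult \<alpha> (star Mr (star Mr (series_cnj f) g) f) \<in> C0 A UNIV" by (rule C0_smult[OF A ZC])
    have "star Mr (star Mr (series_cnj (series_smult \<alpha> f)) g) (series_smult \<alpha> f)
        = series_smult (fps_cnj \<alpha>) (series_smult \<alpha> (star Mr (star Mr (series_cnj f) g) f))"
      unfolding cnj_smult star_smultL[OF A SP cf C0_series[OF g]] star_smultL[OF A SP sY C0_series[OF C0_smult[OF A f]]]
        star_smultR[OF A SP sY sf] ..
    then have "vec_functional Mr \<omega> (series_smult \<alpha> f) g = fps_cnj \<alpha> * (\<alpha> * vec_functional Mr \<omega> f g)"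
      unfolding vec_functional_def using om_smult[OF A lin ZC2] om_smult[OF A lin ZC] by simp
    then show "vec_functional Mr \<omega> (series_smult \<alpha> f) g = 0" using van g by simp
  qed
qed

lemma part_sum:
  assumes f: "f \<in> C0 A UNIV" and g: "g \<in> C0 A UNIV"
  shows "func_supp A (vec_functional Mr \<omega> (series_add f g))
     \<subseteq> func_supp A (vec_functional Mr \<omega> f) \<union> func_supp A (vec_functional Mr \<omega> g)"
proof (rule func_supp_union)
  fix S :: "'m set" assume "open S" and vf: "\<forall>h\<in>C0 A S. vec_functional Mr \<omega> f h = 0"
    and vg: "\<forall>h\<in>C0 A S. vec_functional Mr \<omega> g h = 0"
  show "\<forall>h\<in>C0 A S. vec_functional Mr \<omega> (series_add f g) h = 0"
  proof
    fix h assume h: "h \<in> C0 A S"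
    have hU: "h \<in> C0 A UNIV" using C0_mono[OF h] by blast
    have cfC: "series_cnj f \<in> C0 A UNIV" and cgC: "series_cnj g \<in> C0 A UNIV" and chC: "series_cnj h \<in> C0 A UNIV"
      using C0_cnj[OF A] f g hU by blast+
    note ser = C0_series
    define X where "X = star Mr (series_cnj f) h"
    define Y where "Y = star Mr (series_cnj g) h"
    have XC: "X \<in> C0 A UNIV" unfolding X_def by (rule C0_starR[OF A SP cfC ser[OF hU]])
    have YC: "Y \<in> C0 A UNIV" unfolding Y_def by (rule C0_starR[OF A SP cgC ser[OF hU]])
    have XfC: "star Mr X f \<in> C0 A UNIV" "star Mr X g \<in> C0 A UNIV" "star Mr Y f \<in> C0 A UNIV" "star Mr Y g \<in> C0 A UNIV"
      using C0_starR[OF A SP] XC YC ser[OF f] ser[OF g] by blast+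
    have hh: "star Mr h (series_cnj h) \<in> C0 A S" by (rule C0_starR[OF A SP h ser[OF chC]])
    have cross: "\<omega> (star Mr (star Mr (series_cnj p) h) q) = 0"
      if p: "p \<in> C0 A UNIV" and q: "q \<in> C0 A UNIV" and vp: "\<forall>h\<in>C0 A S. vec_functional Mr \<omega> p h = 0" for p q
    proof -
      define a where "a = star Mr (series_cnj h) p"
      have aC: "a \<in> C0 A UNIV" unfolding a_def by (rule C0_starR[OF A SP chC ser[OF p]])
      have cpC: "series_cnj p \<in> C0 A UNIV" using C0_cnj[OF A p] .
      have ca: "series_cnj a = star Mr (series_cnj p) h"
        unfolding a_def cnj_star[OF A SP ser[OF chC] ser[OF p]] cnj_cnj ..
      have sph: "smooth_series A (star Mr (series_cnj p) h)" using ser[OF C0_starR[OF A SP cpC ser[OF hU]]] .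
      have e1: "star Mr (series_cnj a) a = star Mr (star Mr (series_cnj p) h) (star Mr (series_cnj h) p)"
        unfolding ca by (simp add: a_def)
      have e2: "star Mr (star Mr (series_cnj p) h) (star Mr (series_cnj h) p) = star Mr (star Mr (star Mr (series_cnj p) h) (series_cnj h)) p"
        using star_assoc[OF A SP sph ser[OF chC] ser[OF p]] by simp
      have e3: "star Mr (star Mr (series_cnj p) h) (series_cnj h) = star Mr (series_cnj p) (star Mr h (series_cnj h))"
        by (rule star_assoc[OF A SP ser[OF cpC] ser[OF hU] ser[OF chC]])
      have "star Mr (series_cnj a) a = star Mr (star Mr (series_cnj p) (star Mr h (series_cnj h))) p"
        unfolding e1 e2 e3 ..
      then have "\<omega> (star Mr (series_cnj a) a) = vec_functional Mr \<omega> p (star Mr h (series_cnj h))"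
        unfolding vec_functional_def by simp
      also have "\<dots> = 0" using vp hh by blast
      finally have "\<omega> (star Mr (series_cnj a) (q)) = 0" by (rule cs_zero[OF aC q])
      then show ?thesis unfolding ca .
    qed
    have c1: "\<omega> (star Mr X g) = 0" unfolding X_def by (rule cross[OF f g vf])
    have c2: "\<omega> (star Mr Y f) = 0" unfolding Y_def by (rule cross[OF g f vg])
    have d1: "\<omega> (star Mr X f) = 0" using vf h unfolding X_def vec_functional_def by blast
    have d2: "\<omega> (star Mr Y g) = 0" using vg h unfolding Y_def vec_functional_def by blast
    have "star Mr (star Mr (series_cnj (series_add f g)) h) (series_add f g)
        = series_add (series_add (star Mr X f) (star Mr X g)) (series_add (star Mr Y f) (star Mr Y g))"
      unfolding cnj_add star_addL[OF A SP ser[OF cfC] ser[OF cgC] ser[OF hU]] X_def[symmetric] Y_def[symmetric]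
        star_addL[OF A SP ser[OF XC] ser[OF YC] ser[OF C0_add[OF A f g]]]
        star_addR[OF A SP ser[OF f] ser[OF g] ser[OF XC]] star_addR[OF A SP ser[OF f] ser[OF g] ser[OF YC]] ..
    then have "vec_functional Mr \<omega> (series_add f g) h = \<omega> (star Mr X f) + \<omega> (star Mr X g) + (\<omega> (star Mr Y f) + \<omega> (star Mr Y g))"
      unfolding vec_functional_def using XfC C0_add[OF A] om_add[OF A lin] by simp
    then show "vec_functional Mr \<omega> (series_add f g) h = 0" using c1 c2 d1 d2 by simp
  qed
qed

end


theorem lemma2:
  fixes A :: "('m::{t2_space, second_countable_topology} set \<times> ('m \<Rightarrow> real^'n)) set"
    and pb :: "('m \<Rightarrow> complex) \<Rightarrow> ('m \<Rightarrow> complex) \<Rightarrow> ('m \<Rightarrow> complex)"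
    and Mr :: "nat \<Rightarrow> ('m \<Rightarrow> complex) \<Rightarrow> ('m \<Rightarrow> complex) \<Rightarrow> ('m \<Rightarrow> complex)"
    and \<omega> :: "'m fseries \<Rightarrow> complex fps"
    and f g :: "'m fseries" and \<alpha> :: "complex fps"
  assumes "smooth_atlas A"
    and "poisson_bracket A pb"
    and "star_product A pb Mr"
    and "positive_functional A Mr \<omega>"
    and "f \<in> C0 A UNIV" and "g \<in> C0 A UNIV"
  shows "(ssupp f \<inter> func_supp A \<omega> = {} \<longrightarrow> f \<in> gelfand_ideal A Mr \<omega>)
     \<and> func_supp A (vec_functional Mr \<omega> f) \<subseteq> ssupp f \<inter> func_supp A \<omega>
     \<and> func_supp A (vec_functional Mr \<omega> (series_add f g))
         \<subseteq> func_supp A (vec_functional Mr \<omega> f) \<union> func_supp A (vec_functional Mr \<omega> g)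
     \<and> func_supp A (vec_functional Mr \<omega> (series_smult \<alpha> f))
         \<subseteq> func_supp A (vec_functional Mr \<omega> f)"
proof (intro conjI impI)
  assume "ssupp f \<inter> func_supp A \<omega> = {}"
  then show "f \<in> gelfand_ideal A Mr \<omega>" using part_i[OF assms(1,3,4,5)] by blast
next
  show "func_supp A (vec_functional Mr \<omega> f) \<subseteq> ssupp f \<inter> func_supp A \<omega>"
    using part_iia[OF assms(1,3,4,5)] part_iib[OF assms(1,3,4,5)] by blast
next
  show "func_supp A (vec_functional Mr \<omega> (series_add f g))
         \<subseteq> func_supp A (vec_functional Mr \<omega> f) \<union> func_supp A (vec_functional Mr \<omega> g)"
    by (rule part_sum[OF assms(1,3,4,5,6)])
next
  show "func_supp A (vec_functional Mr \<omega> (series_smult \<alpha> f))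
         \<subseteq> func_supp A (vec_functional Mr \<omega> f)"
    by (rule part_smult[OF assms(1,3,4,5)])
qed

end
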